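(* Let $A$ be a formula in which the bound variables are pairwise distinct and distinct from the free variables. If the sequent $\vdash A$ (with empty context) has a derivation in LJ$^{+}$, then it also has a derivation in LJB.
   Context: Minimal predicate logic: terms $t ::= x \mid f(t_1,\dots,t_n)$, formulas $A ::= P(t_1,\dots,t_n)\mid A\rightarrow A\mid \forall x\,A$. Positivity: atomic formulas are positive and negative; $A\rightarrow B$ is positive (resp. negative) if $A$ is negative (resp. positive) and $B$ positive (resp. negative); $\forall x\,A$ is positive if $A$ is positive, never negative. A sequent is positive if its context formulas are negative and its right-hand side positive; both calculi below are for positive sequents. LJ$^{+}$: sequents $\Gamma\vdash A$ with $\Gamma$ a finite multiset of formulas, formulas modulo $\alpha$-equivalence; rules (L$\rightarrow$) from $\Gamma, A_1\rightarrow\dots\rightarrow A_n\rightarrow P\vdash A_i$ ($i=1..n$, $n\ge0$) infer $\Gamma, A_1\rightarrow\dots\rightarrow A_n\rightarrow P\vdash P$, $P$ atomic; (R$\forall$) from $\Gamma\vdash A$ infer $\Gamma\vdash\forall x\,A$ if $x$ not free in $\Gamma$; (R$\rightarrow$) from $\Gamma,A\vdash B$ infer $\Gamma\vdash A\rightarrow B$. LJB: an LJB-context is a finite multiset of items; an item is a formula or $[\Gamma]_V$ ($V$ a finite set of variables bound by the bracket, $\Gamma$ an LJB-context); $FV([\Gamma]_V)=FV(\Gamma)\setminus V$. Cleaning rules (anywhere in a context, contexts being multisets): $[I,\Gamma]_V\longrightarrow I,[\Gamma]_V$ if $FV(I)\cap V=\emptyset$; $[\ ]_V\longrightarrow\emptyset$;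 $I\,I\longrightarrow I$. This system terminates; $\Gamma{\downarrow}$ denotes the normal form of $\Gamma$ obtained with a fixed arbitrary strategy. LJB rules apply only to LJB-sequents $\Gamma\vdash A$ with $\Gamma$ in normal form and in which, in each formula, bound variables are pairwise distinct and distinct from free variables; formulas are not identified modulo $\alpha$. Rules: (L$\rightarrow$) from $\Gamma'\vdash A_1,\dots,\Gamma'\vdash A_n$ infer $\Gamma\vdash P$, where $\Gamma=\Gamma_1,[\Gamma_2,[\dots\Gamma_{i-1},[\Gamma_i, A_1\rightarrow\dots\rightarrow A_n\rightarrow P]_{V_{i-1}}\dots]_{V_2}]_{V_1}$ ($i\ge1$), $\Gamma'=([\dots[[\Gamma_1]_{V_1},\Gamma_2]_{V_2},\dots,\Gamma_{i-1}]_{V_{i-1}},\Gamma_i,A_1\rightarrow\dots\rightarrow A_n\rightarrow P){\downarrow}$, $P$ atomic with no free variable in $V_1\cup\dots\cup V_{i-1}$; (R$\forall$) from $[\Gamma]_V{\downarrow}\vdash A$ infer $\Gamma\vdash\forall x\,A$, where $V$ is the set of all variables bound in $\forall x\,A$; (R$\rightarrow$) from $(\Gamma,A){\downarrow}\vdash B$ infer $\Gamma\vdash A\rightarrow B$. *)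

theory Defs
  imports Main "HOL-Library.Multiset"
begin

text \<open>Variables are natural numbers (an infinite supply); function symbols
of type 'f and predicate symbols of type 'p are arbitrary.\<close>

type_synonym var = nat

datatype 'f trm = Var var | Fn 'f "'f trm list"

datatype ('f,'p) form =
    Atom 'p "'f trm list"
  | Imp "('f,'p) form" "('f,'p) form"
  | All var "('f,'p) form"

primrec fvt :: "'f trm \<Rightarrow> var set" where
  "fvt (Var x) = {x}"
| "fvt (Fn f ts) = \<Union> (set (map fvt ts))"

definition fvts :: "'f trm list \<Rightarrow> var set" where
  "fvts ts = \<Union> (fvt ` set ts)"

primrec fv :: "('f,'p) form \<Rightarrow> var set" where
  "fv (Atom p ts) = fvts ts"
| "fv (Imp A B) = fv A \<union> fv B"
| "fv (All x A) = fv A - {x}"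

primrec bvl :: "('f,'p) form \<Rightarrow> var list" where
  "bvl (Atom p ts) = []"
| "bvl (Imp A B) = bvl A @ bvl B"
| "bvl (All x A) = x # bvl A"

definition wf_vars :: "('f,'p) form \<Rightarrow> bool" where
  "wf_vars A \<longleftrightarrow> distinct (bvl A) \<and> set (bvl A) \<inter> fv A = {}"

fun avar :: "(var \<times> var) list \<Rightarrow> var \<Rightarrow> var \<Rightarrow> bool" where
  "avar [] x y = (x = y)"
| "avar ((a,b) # E) x y = (if x = a \<or> y = b then x = a \<and> y = b else avar E x y)"

inductive alpha_t :: "(var \<times> var) list \<Rightarrow> 'f trm \<Rightarrow> 'f trm \<Rightarrow> bool" for E where
  "avar E x y \<Longrightarrow> alpha_t E (Var x) (Var y)"
| "list_all2 (alpha_t E) ts us \<Longrightarrow> alpha_t E (Fn f ts) (Fn f us)"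

fun alpha_f :: "(var \<times> var) list \<Rightarrow> ('f,'p) form \<Rightarrow> ('f,'p) form \<Rightarrow> bool" where
  "alpha_f E (Atom p ts) (Atom q us) = (p = q \<and> list_all2 (alpha_t E) ts us)"
| "alpha_f E (Imp A B) (Imp C D) = (alpha_f E A C \<and> alpha_f E B D)"
| "alpha_f E (All x A) (All y B) = alpha_f ((x,y) # E) A B"
| "alpha_f E _ _ = False"

definition alpha :: "('f,'p) form \<Rightarrow> ('f,'p) form \<Rightarrow> bool" where
  "alpha A B = alpha_f [] A B"

fun pos :: "('f,'p) form \<Rightarrow> bool" and neg :: "('f,'p) form \<Rightarrow> bool" where
  "pos (Atom p ts) = True"
| "pos (Imp A B) = (neg A \<and> pos B)"
| "pos (All x A) = pos A"
| "neg (Atom p ts) = True"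
| "neg (Imp A B) = (pos A \<and> neg B)"
| "neg (All x A) = False"

definition pos_seq :: "('f,'p) form multiset \<Rightarrow> ('f,'p) form \<Rightarrow> bool" where
  "pos_seq \<Gamma> A \<longleftrightarrow> (\<forall>B\<in>#\<Gamma>. neg B) \<and> pos A"

text \<open>Working modulo alpha is modelled by closing derivability under
alpha-equivalence of all formulas of a sequent (rule lj_alpha).\<close>

inductive ljp :: "('f,'p) form multiset \<Rightarrow> ('f,'p) form \<Rightarrow> bool" where
  lj_imp_L: "\<lbrakk> F = foldr Imp As (Atom p ts);
              pos_seq (add_mset F \<Gamma>) (Atom p ts);
              \<forall>a\<in>set As. ljp (add_mset F \<Gamma>) a \<rbrakk>
          \<Longrightarrow> ljp (add_mset F \<Gamma>) (Atom p ts)"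
| lj_all_R: "\<lbrakk> ljp \<Gamma> A; x \<notin> (\<Union>B\<in>set_mset \<Gamma>. fv B); pos_seq \<Gamma> (All x A) \<rbrakk>
          \<Longrightarrow> ljp \<Gamma> (All x A)"
| lj_imp_R: "\<lbrakk> ljp (add_mset A \<Gamma>) B; pos_seq \<Gamma> (Imp A B) \<rbrakk> \<Longrightarrow> ljp \<Gamma> (Imp A B)"
| lj_alpha: "\<lbrakk> ljp \<Gamma> A; rel_mset alpha \<Gamma> \<Gamma>'; alpha A A' \<rbrakk> \<Longrightarrow> ljp \<Gamma>' A'"

datatype ('f,'p) item = Fm "('f,'p) form" | Br "var set" "('f,'p) item multiset"

primrec fvi :: "('f,'p) item \<Rightarrow> var set" where
  "fvi (Fm A) = fv A"
| "fvi (Br V G) = \<Union> (set_mset (image_mset fvi G)) - V"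

primrec formsi :: "('f,'p) item \<Rightarrow> ('f,'p) form set" where
  "formsi (Fm A) = {A}"
| "formsi (Br V G) = \<Union> (set_mset (image_mset formsi G))"

definition ctx_forms :: "('f,'p) item multiset \<Rightarrow> ('f,'p) form set" where
  "ctx_forms G = (\<Union>I\<in>set_mset G. formsi I)"

inductive cstep :: "('f,'p) item multiset \<Rightarrow> ('f,'p) item multiset \<Rightarrow> bool" where
  c_out: "fvi I \<inter> V = {} \<Longrightarrow>
     cstep (add_mset (Br V (add_mset I G)) D) (add_mset I (add_mset (Br V G) D))"
| c_empty: "cstep (add_mset (Br V {#}) D) D"
| c_dup: "cstep (add_mset I (add_mset I D)) (add_mset I D)"
| c_cong: "cstep G G' \<Longrightarrow> cstep (add_mset (Br V G) D) (add_mset (Br V G') D)"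

definition normal :: "('f,'p) item multiset \<Rightarrow> bool" where
  "normal G \<longleftrightarrow> (\<nexists>G'. cstep G G')"

definition nf_strategy :: "(('f,'p) item multiset \<Rightarrow> ('f,'p) item multiset) \<Rightarrow> bool" where
  "nf_strategy nf \<longleftrightarrow> (\<forall>G. cstep\<^sup>*\<^sup>* G (nf G) \<and> normal (nf G))"

definition ljb_seq :: "('f,'p) item multiset \<Rightarrow> ('f,'p) form \<Rightarrow> bool" where
  "ljb_seq G A \<longleftrightarrow> normal G \<and> (\<forall>B\<in>ctx_forms G. wf_vars B \<and> neg B) \<and> wf_vars A \<and> pos A"

text \<open>nest [(G1,V1),...,(G(i-1),V(i-1))] D = G1,[G2,[...G(i-1),[D]_V(i-1)...]_V2]_V1\<close>
primrec nest :: "(('f,'p) item multiset \<times> var set) list \<Rightarrow> ('f,'p) item multiset \<Rightarrow> ('f,'p) item multiset" where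
  "nest [] D = D"
| "nest (GV # L) D = fst GV + {# Br (snd GV) (nest L D) #}"

text \<open>unnest [(G1,V1),...,(G(i-1),V(i-1))] = [...[[G1]_V1,G2]_V2,...,G(i-1)]_V(i-1)
  (the empty context when i = 1).\<close>
definition unnest :: "(('f,'p) item multiset \<times> var set) list \<Rightarrow> ('f,'p) item multiset" where
  "unnest L = foldl (\<lambda>acc GV. {# Br (snd GV) (acc + fst GV) #}) {#} L"

inductive ljb :: "(('f,'p) item multiset \<Rightarrow> ('f,'p) item multiset)
                  \<Rightarrow> ('f,'p) item multiset \<Rightarrow> ('f,'p) form \<Rightarrow> bool" for nf where
  ljb_imp_L: "\<lbrakk> F = foldr Imp As (Atom p ts);
               \<Gamma> = nest L (add_mset (Fm F) Gi);
               ljb_seq \<Gamma> (Atom p ts);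
               fvts ts \<inter> (\<Union>GV\<in>set L. snd GV) = {};
               \<forall>a\<in>set As. ljb nf (nf (unnest L + Gi + {# Fm F #})) a \<rbrakk>
           \<Longrightarrow> ljb nf \<Gamma> (Atom p ts)"
| ljb_all_R: "\<lbrakk> ljb nf (nf {# Br (set (bvl (All x A))) \<Gamma> #}) A; ljb_seq \<Gamma> (All x A) \<rbrakk>
           \<Longrightarrow> ljb nf \<Gamma> (All x A)"
| ljb_imp_R: "\<lbrakk> ljb nf (nf (add_mset (Fm A) \<Gamma>)) B; ljb_seq \<Gamma> (Imp A B) \<rbrakk>
           \<Longrightarrow> ljb nf \<Gamma> (Imp A B)"

end

theory Submission
  imports Defs
begin


datatype 'f dtrm = DV var | DB nat | DF 'f "'f dtrm list"
datatype ('f,'p) dform = DAt 'p "'f dtrm list" | DImp "('f,'p) dform" "('f,'p) dform" | DAll "('f,'p) dform"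

primrec idx :: "var list \<Rightarrow> var \<Rightarrow> nat option" where
  "idx [] v = None"
| "idx (a#E) v = (if a = v then Some 0 else map_option Suc (idx E v))"

primrec dbt :: "var list \<Rightarrow> 'f trm \<Rightarrow> 'f dtrm" where
  "dbt E (Var v) = (case idx E v of Some i \<Rightarrow> DB i | None \<Rightarrow> DV v)"
| "dbt E (Fn f ts) = DF f (map (dbt E) ts)"

primrec dbf :: "var list \<Rightarrow> ('f,'p) form \<Rightarrow> ('f,'p) dform" where
  "dbf E (Atom p ts) = DAt p (map (dbt E) ts)"
| "dbf E (Imp A B) = DImp (dbf E A) (dbf E B)"
| "dbf E (All x A) = DAll (dbf (x#E) A)"

primrec rent :: "(var \<Rightarrow> var) \<Rightarrow> 'f dtrm \<Rightarrow> 'f dtrm" where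
  "rent f (DV v) = DV (f v)"
| "rent f (DB i) = DB i"
| "rent f (DF g ts) = DF g (map (rent f) ts)"

primrec ren :: "(var \<Rightarrow> var) \<Rightarrow> ('f,'p) dform \<Rightarrow> ('f,'p) dform" where
  "ren f (DAt p ts) = DAt p (map (rent f) ts)"
| "ren f (DImp A B) = DImp (ren f A) (ren f B)"
| "ren f (DAll A) = DAll (ren f A)"

primrec dfvt :: "'f dtrm \<Rightarrow> var set" where
  "dfvt (DV v) = {v}"
| "dfvt (DB i) = {}"
| "dfvt (DF g ts) = \<Union> (set (map dfvt ts))"

primrec dfv :: "('f,'p) dform \<Rightarrow> var set" where
  "dfv (DAt p ts) = \<Union> (set (map dfvt ts))"
| "dfv (DImp A B) = dfv A \<union> dfv B"
| "dfv (DAll A) = dfv A"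

lemma idx_None: "idx E v = None \<longleftrightarrow> v \<notin> set E"
  by (induct E) auto

lemma idx_Some_mem: "idx E v = Some i \<Longrightarrow> v \<in> set E"
  by (induct E arbitrary: i) (auto split: if_splits)

lemma idx_Some_less: "idx E v = Some i \<Longrightarrow> i < length E"
  by (induct E arbitrary: i) (auto split: if_splits)

lemma idx_append: "idx (E@[x]) u = (case idx E u of Some i \<Rightarrow> Some i | None \<Rightarrow> if u = x then Some (length E) else None)"
  by (induct E) (auto split: option.splits)

lemma rent_cong: "(\<forall>v\<in>dfvt t. f v = g v) \<Longrightarrow> rent f t = rent g t"
  by (induct t) auto

lemma ren_cong: "(\<forall>v\<in>dfv A. f v = g v) \<Longrightarrow> ren f A = ren g A"
  by (induct A) (auto intro: rent_cong)

lemma rent_comp: "rent f (rent g t) = rent (f \<circ> g) t"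
  by (induct t) (auto simp: comp_def)

lemma ren_comp: "ren f (ren g A) = ren (f \<circ> g) A"
  by (induct A) (auto simp: rent_comp comp_def)

lemma rent_id0[simp]: "rent (\<lambda>v. v) t = t"
  by (induct t) (auto intro: map_idI)

lemma rent_id[simp]: "rent id t = t"
  using rent_id0 by (simp add: id_def)

lemma ren_id0[simp]: "ren (\<lambda>v. v) A = A"
  by (induct A) (auto intro: map_idI simp: rent_id0)

lemma ren_id[simp]: "ren id A = A"
  using ren_id0 by (simp add: id_def)

lemma dfvt_rent: "dfvt (rent f t) = f ` dfvt t"
  by (induct t) auto

lemma dfv_ren: "dfv (ren f A) = f ` dfv A"
  by (induct A) (auto simp: dfvt_rent)

lemma dfvt_dbt: "dfvt (dbt E t) = fvt t - set E"
  by (induct t) (auto split: option.splits simp: idx_None dest: idx_Some_mem)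

lemma dfv_dbf: "dfv (dbf E A) = fv A - set E"
  by (induct A arbitrary: E) (auto simp: dfvt_dbt fvts_def)

lemma dbt_nil_inj: "dbt [] t = dbt [] s \<Longrightarrow> t = s"
proof (induct t arbitrary: s)
  case (Var x) then show ?case by (cases s) auto
next
  case (Fn f ts)
  show ?case
  proof (cases s)
    case (Var w) with Fn.prems show ?thesis by (auto split: option.splits)
  next
    case (Fn g us)
    with Fn.prems have "g = f" "map (dbt []) ts = map (dbt []) us" by auto
    then have "length us = length ts" "\<forall>i<length ts. dbt [] (ts!i) = dbt [] (us!i)"
      by (metis length_map, metis length_map nth_map)
    with Fn.hyps have "ts = us" by (auto simp: list_eq_iff_nth_eq)
    with Fn \<open>g = f\<close> show ?thesis by simp
  qed
qed

lemma inj_dbt_nil: "inj (dbt [])"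
  by (auto intro: injI dbt_nil_inj)

lemma avar_idx: "avar E x y \<Longrightarrow> idx (map fst E) x = idx (map snd E) y \<and> (idx (map fst E) x = None \<longrightarrow> x = y)"
proof (induct E x y rule: avar.induct)
  case (1 x y) then show ?case by simp
next
  case (2 a b E x y)
  show ?case
  proof (cases "x = a \<or> y = b")
    case True with 2(2) show ?thesis by (simp only: avar.simps if_True) simp
  next
    case False
    with 2(2) have "avar E x y" by simp
    with 2(1) False have "idx (map fst E) x = idx (map snd E) y \<and> (idx (map fst E) x = None \<longrightarrow> x = y)" by blast
    with False show ?thesis by simp
  qed
qed

lemma avar_db: "avar E x y \<Longrightarrow> dbt (map fst E) (Var x) = dbt (map snd E) (Var y)"
  by (drule avar_idx) (auto split: option.splits)

lemma alpha_t_db: "alpha_t E t u \<Longrightarrow> dbt (map fst E) t = dbt (map snd E) u"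
proof (induct rule: alpha_t.induct)
  case (1 x y) then show ?case using avar_db by blast
next
  case (2 ts us f) then show ?case
    by (auto simp: list_all2_conv_all_nth list_eq_iff_nth_eq)
qed

lemma alpha_f_db: "alpha_f E A B \<Longrightarrow> dbf (map fst E) A = dbf (map snd E) B"
proof (induct E A B rule: alpha_f.induct)
  case (1 E p ts q us) then show ?case
    by (auto simp: list_all2_conv_all_nth list_eq_iff_nth_eq alpha_t_db)
qed auto

lemma alpha_db: "alpha A B \<Longrightarrow> dbf [] A = dbf [] B"
  using alpha_f_db[of "[]"] by (simp add: alpha_def)

lemma alpha_f_pos: "alpha_f E A B \<Longrightarrow> (pos A \<longleftrightarrow> pos B) \<and> (neg A \<longleftrightarrow> neg B)"
  by (induct E A B rule: alpha_f.induct) auto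

lemma ljp_pos: "ljp G A \<Longrightarrow> pos A"
  by (induct rule: ljp.induct) (auto simp: pos_seq_def alpha_def dest: alpha_f_pos)

lemma allt: "length E = length E' \<Longrightarrow> rent \<sigma> (dbt (E@[x]) t) = dbt (E'@[y]) s \<Longrightarrow>
   \<tau> x = y \<Longrightarrow> (\<forall>v. v \<noteq> x \<longrightarrow> \<tau> v = \<sigma> v) \<Longrightarrow>
   rent \<tau> (dbt E t) = dbt E' s"
proof (induct t arbitrary: s)
  case (Var u)
  show ?case
  proof (cases s)
    case (Var w)
    with Var.prems show ?thesis
      by (auto simp: idx_append idx_None split: option.splits if_splits dest: idx_Some_less idx_Some_mem)
  next
    case (Fn g us) with Var.prems show ?thesis
      by (auto simp: idx_append split: option.splits if_splits)
  qed
next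
  case (Fn f ts)
  show ?case
  proof (cases s)
    case (Var w) with Fn.prems show ?thesis
      by (auto simp: idx_append split: option.splits if_splits)
  next
    case (Fn g us)
    with Fn.prems have "g = f" "length us = length ts" "\<forall>i<length ts. rent \<sigma> (dbt (E@[x]) (ts!i)) = dbt (E'@[y]) (us!i)"
      by (auto simp: list_eq_iff_nth_eq)
    with Fn.hyps[OF nth_mem] Fn.prems(1,3,4) have "\<forall>i<length ts. rent \<tau> (dbt E (ts!i)) = dbt E' (us!i)"
      by blast
    with Fn \<open>g = f\<close> \<open>length us = length ts\<close> show ?thesis
      by (auto simp: list_eq_iff_nth_eq)
  qed
qed

lemma allf: "length E = length E' \<Longrightarrow> ren \<sigma> (dbf (E@[x]) A) = dbf (E'@[y]) B \<Longrightarrow>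
   \<tau> x = y \<Longrightarrow> (\<forall>v. v \<noteq> x \<longrightarrow> \<tau> v = \<sigma> v) \<Longrightarrow>
   ren \<tau> (dbf E A) = dbf E' B"
proof (induct A arbitrary: B E E')
  case (Atom p ts)
  show ?case
  proof (cases B)
    case (Atom q us)
    with Atom.prems have "q = p" "length us = length ts" "\<forall>i<length ts. rent \<sigma> (dbt (E@[x]) (ts!i)) = dbt (E'@[y]) (us!i)"
      by (auto simp: list_eq_iff_nth_eq)
    with allt Atom.prems(1,3,4) have "\<forall>i<length ts. rent \<tau> (dbt E (ts!i)) = dbt E' (us!i)"
      by blast
    with Atom \<open>q = p\<close> \<open>length us = length ts\<close> show ?thesis
      by (auto simp: list_eq_iff_nth_eq)
  qed (use Atom.prems in auto)
next
  case (Imp A1 A2) then show ?case by (cases B) auto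
next
  case (All z A) then show ?case
    by (cases B) (auto dest: All.hyps[where E="z#E" for E, simplified])
qed

lemma all_inv: "ren \<sigma> (dbf [] (All x A)) = dbf [] B \<Longrightarrow>
   \<exists>y B0. B = All y B0 \<and> ren (\<sigma>(x:=y)) (dbf [] A) = dbf [] B0"
  by (cases B) (auto intro: allf[where E="[]" and E'="[]", simplified])

lemma imp_inv: "ren \<sigma> (dbf [] (Imp A1 A2)) = ren \<tau> (dbf [] B) \<Longrightarrow>
   \<exists>B1 B2. B = Imp B1 B2 \<and> ren \<sigma> (dbf [] A1) = ren \<tau> (dbf [] B1) \<and> ren \<sigma> (dbf [] A2) = ren \<tau> (dbf [] B2)"
  by (cases B) auto

lemma atom_inv: "ren \<sigma> (dbf [] (Atom p ts)) = ren \<tau> (dbf [] B) \<Longrightarrow>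
   \<exists>us. B = Atom p us \<and> map (rent \<sigma> \<circ> dbt []) ts = map (rent \<tau> \<circ> dbt []) us"
  by (cases B) auto

lemma foldr_inv: "ren \<sigma> (dbf [] (foldr Imp As (Atom p ts))) = ren \<tau> (dbf [] F) \<Longrightarrow>
   \<exists>As' us. F = foldr Imp As' (Atom p us) \<and> list_all2 (\<lambda>a a'. ren \<sigma> (dbf [] a) = ren \<tau> (dbf [] a')) As As'
     \<and> map (rent \<sigma> \<circ> dbt []) ts = map (rent \<tau> \<circ> dbt []) us"
proof (induct As arbitrary: F)
  case Nil
  from atom_inv[of \<sigma> p ts \<tau> F] Nil.prems obtain us where
    "F = Atom p us" "map (rent \<sigma> \<circ> dbt []) ts = map (rent \<tau> \<circ> dbt []) us" by auto
  moreover have "list_all2 (\<lambda>a a'. ren \<sigma> (dbf [] a) = ren \<tau> (dbf [] a')) [] []" by simp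
  ultimately show ?case by (metis foldr.simps(1) id_apply)
next
  case (Cons a As)
  from imp_inv[OF Cons.prems[unfolded foldr_Cons o_apply]] obtain B1 B2 where
    "F = Imp B1 B2" "ren \<sigma> (dbf [] a) = ren \<tau> (dbf [] B1)" "ren \<sigma> (dbf [] (foldr Imp As (Atom p ts))) = ren \<tau> (dbf [] B2)"
    by auto
  moreover from Cons.hyps[OF this(3)] obtain As' us where
    "B2 = foldr Imp As' (Atom p us)" "list_all2 (\<lambda>a a'. ren \<sigma> (dbf [] a) = ren \<tau> (dbf [] a')) As As'"
    "map (rent \<sigma> \<circ> dbt []) ts = map (rent \<tau> \<circ> dbt []) us" by blast
  ultimately have "F = foldr Imp (B1#As') (Atom p us)"
    "list_all2 (\<lambda>a a'. ren \<sigma> (dbf [] a) = ren \<tau> (dbf [] a')) (a#As) (B1#As')" by auto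
  with \<open>map (rent \<sigma> \<circ> dbt []) ts = map (rent \<tau> \<circ> dbt []) us\<close> show ?case by blast
qed



definition upd :: "(var \<Rightarrow> var) \<Rightarrow> var set \<Rightarrow> (var \<Rightarrow> var) \<Rightarrow> var \<Rightarrow> var" where
  "upd \<theta> V a v = (if v \<in> V then a v else \<theta> v)"

inductive opM :: "var set \<Rightarrow> (var \<Rightarrow> var) \<Rightarrow> ('f,'p) item multiset \<Rightarrow> ('f,'p) dform set \<Rightarrow> var set \<Rightarrow> bool"
  for U :: "var set" where
  oE: "opM U \<theta> G {} {}"
| oF: "opM U \<theta> G \<Delta> N \<Longrightarrow> Fm A \<in># G \<Longrightarrow> opM U \<theta> G (insert (ren \<theta> (dbf [] A)) \<Delta>) N"
| oB: "opM U \<theta> G \<Delta> N \<Longrightarrow> Br V H \<in># G \<Longrightarrow> finite V \<Longrightarrow> inj_on a V \<Longrightarrow> a ` V \<inter> U = {} \<Longrightarrow>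
       opM U (upd \<theta> V a) H \<Delta>' N' \<Longrightarrow> a ` V \<inter> N' = {} \<Longrightarrow> (N' \<union> a ` V) \<inter> N = {} \<Longrightarrow>
       opM U \<theta> G (\<Delta> \<union> \<Delta>') (N \<union> (N' \<union> a ` V))"

definition opD :: "var set \<Rightarrow> (var \<Rightarrow> var) \<Rightarrow> ('f,'p) item \<Rightarrow> ('f,'p) dform set \<Rightarrow> var set \<Rightarrow> bool" where
  "opD U \<theta> I \<Delta> N \<longleftrightarrow> (\<exists>A. I = Fm A \<and> \<Delta> = {ren \<theta> (dbf [] A)} \<and> N = {}) \<or>
     (\<exists>V H a N'. I = Br V H \<and> finite V \<and> inj_on a V \<and> a ` V \<inter> U = {} \<and>
        opM U (upd \<theta> V a) H \<Delta> N' \<and> a ` V \<inter> N' = {} \<and> N = N' \<union> a ` V)"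

definition fvm :: "('f,'p) item multiset \<Rightarrow> var set" where
  "fvm G = \<Union> (fvi ` set_mset G)"

definition cfv :: "('f,'p) item multiset \<Rightarrow> var set" where
  "cfv G = \<Union> (fv ` ctx_forms G)"

lemma formsi_Br: "formsi (Br V H) = ctx_forms H"
  by (simp add: ctx_forms_def)

lemma ctx_forms_add[simp]: "ctx_forms (add_mset I G) = formsi I \<union> ctx_forms G"
  by (simp add: ctx_forms_def)
lemma ctx_forms_plus[simp]: "ctx_forms (G + H) = ctx_forms G \<union> ctx_forms H"
  by (simp add: ctx_forms_def)
lemma ctx_forms_empty[simp]: "ctx_forms {#} = {}"
  by (simp add: ctx_forms_def)

lemma cfv_sub: "I \<in># G \<Longrightarrow> \<Union> (fv ` formsi I) \<subseteq> cfv G"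
  by (auto simp: cfv_def ctx_forms_def)

lemma cfv_Br: "Br V H \<in># G \<Longrightarrow> cfv H \<subseteq> cfv G"
proof -
  assume "Br V H \<in># G"
  then have "ctx_forms H \<subseteq> ctx_forms G"
    unfolding ctx_forms_def[of G] using formsi_Br[of V H] by blast
  then show ?thesis by (auto simp: cfv_def)
qed

lemma fvi_formsi: "fvi I \<subseteq> \<Union> (fv ` formsi I)"
  by (induct I) auto

lemma fvm_cfv: "fvm G \<subseteq> cfv G"
  using fvi_formsi by (fastforce simp: fvm_def cfv_def ctx_forms_def)

lemma opM_fin: "opM U \<theta> G \<Delta> N \<Longrightarrow> finite N"
  by (induct rule: opM.induct) auto

lemma opM_NU: "opM U \<theta> G \<Delta> N \<Longrightarrow> N \<inter> U = {}"
  by (induct rule: opM.induct) auto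

lemma opM_mono: "opM U \<theta> G \<Delta> N \<Longrightarrow> set_mset G \<subseteq> set_mset G' \<Longrightarrow> opM U \<theta> G' \<Delta> N"
proof (induct rule: opM.induct)
  case (oE \<theta> G) show ?case by (rule opM.oE)
next
  case (oF \<theta> G \<Delta> N A) then show ?case by (auto intro: opM.oF)
next
  case (oB \<theta> G \<Delta> N V H a \<Delta>' N') then show ?case by (auto intro: opM.oB)
qed

lemma opD_add: "opM U \<theta> G \<Delta> N \<Longrightarrow> I \<in># G \<Longrightarrow> opD U \<theta> I \<Delta>I NI \<Longrightarrow> N \<inter> NI = {} \<Longrightarrow>
  opM U \<theta> G (\<Delta> \<union> \<Delta>I) (N \<union> NI)"
  unfolding opD_def
proof (elim disjE exE conjE)
  fix A assume "opM U \<theta> G \<Delta> N" "I \<in># G" "I = Fm A" "\<Delta>I = {ren \<theta> (dbf [] A)}" "NI = {}"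
  then show ?thesis using opM.oF[of U \<theta> G \<Delta> N A] by auto
next
  fix V H a N' assume "opM U \<theta> G \<Delta> N" "I \<in># G" "N \<inter> NI = {}" "I = Br V H" "finite V" "inj_on a V"
    "a ` V \<inter> U = {}" "opM U (upd \<theta> V a) H \<Delta>I N'" "a ` V \<inter> N' = {}" "NI = N' \<union> a ` V"
  then show ?thesis using opM.oB[of U \<theta> G \<Delta> N V H a \<Delta>I N'] by auto
qed

lemma opM_induct2[consumes 1, case_names empty add]:
  assumes "opM U \<theta> G \<Delta> N" "P {} {}"
    "\<And>\<Delta> N I \<Delta>I NI. opM U \<theta> G \<Delta> N \<Longrightarrow> P \<Delta> N \<Longrightarrow> I \<in># G \<Longrightarrow> opD U \<theta> I \<Delta>I NI \<Longrightarrow> N \<inter> NI = {} \<Longrightarrow>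
       P (\<Delta> \<union> \<Delta>I) (N \<union> NI)"
  shows "P \<Delta> N"
proof -
  have "opM U \<theta>' G' \<Delta> N \<Longrightarrow> \<theta>' = \<theta> \<Longrightarrow> G' = G \<Longrightarrow> P \<Delta> N" for \<theta>' G' \<Delta> N
  proof (induct rule: opM.induct)
    case (oE \<theta> G) show ?case by (rule assms(2))
  next
    case (oF \<theta>1 G1 \<Delta> N A)
    then have "opD U \<theta> (Fm A) {ren \<theta> (dbf [] A)} {}" by (simp add: opD_def)
    from assms(3)[OF _ _ _ this] oF show ?case by auto
  next
    case (oB \<theta>1 G1 \<Delta> N V H a \<Delta>' N')
    then have "opD U \<theta> (Br V H) \<Delta>' (N' \<union> a ` V)" by (auto simp: opD_def)
    moreover have "N \<inter> (N' \<union> a ` V) = {}" using oB by blast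
    ultimately show ?case using assms(3) oB by auto
  qed
  with assms(1) show ?thesis by blast
qed

lemma opM_union: "opM U \<theta> G \<Delta>2 N2 \<Longrightarrow> opM U \<theta> G \<Delta>1 N1 \<Longrightarrow> N1 \<inter> N2 = {} \<Longrightarrow>
  opM U \<theta> G (\<Delta>1 \<union> \<Delta>2) (N1 \<union> N2)"
proof (induct rule: opM_induct2)
  case empty then show ?case by simp
next
  case (add \<Delta> N I \<Delta>I NI)
  then have "opM U \<theta> G (\<Delta>1 \<union> \<Delta>) (N1 \<union> N)" by blast
  from opD_add[OF this add(3,4)] add(5,7) have "opM U \<theta> G ((\<Delta>1 \<union> \<Delta>) \<union> \<Delta>I) ((N1 \<union> N) \<union> NI)" by blast
  then show ?case by (simp add: Un_assoc)
qed

lemma opD_single: "I \<in># G \<Longrightarrow> opD U \<theta> I \<Delta>I NI \<Longrightarrow> opM U \<theta> G \<Delta>I NI"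
  using opD_add[OF opM.oE] by fastforce

lemma opM_locate: "opM U \<theta> G \<Delta> N \<Longrightarrow> D \<in> \<Delta> \<Longrightarrow> \<exists>I \<Delta>I NI \<Delta>r Nr. I \<in># G \<and> opD U \<theta> I \<Delta>I NI \<and> D \<in> \<Delta>I \<and>
   opM U \<theta> G \<Delta>r Nr \<and> \<Delta> = \<Delta>r \<union> \<Delta>I \<and> N = Nr \<union> NI \<and> Nr \<inter> NI = {}"
proof (induct arbitrary: D rule: opM_induct2)
  case empty then show ?case by simp
next
  case (add \<Delta> N I \<Delta>I NI)
  show ?case
  proof (cases "D \<in> \<Delta>I")
    case True with add show ?thesis by blast
  next
    case False
    with add obtain J \<Delta>J NJ \<Delta>r Nr where J: "J \<in># G" "opD U \<theta> J \<Delta>J NJ" "D \<in> \<Delta>J"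
      "opM U \<theta> G \<Delta>r Nr" "\<Delta> = \<Delta>r \<union> \<Delta>J" "N = Nr \<union> NJ" "Nr \<inter> NJ = {}" by blast
    from opD_add[OF J(4) add(3,4)] J add(5) have "opM U \<theta> G (\<Delta>r \<union> \<Delta>I) (Nr \<union> NI)" by blast
    with J add(5) show ?thesis
      by (intro exI[of _ J] exI[of _ \<Delta>J] exI[of _ NJ] exI[of _ "\<Delta>r \<union> \<Delta>I"] exI[of _ "Nr \<union> NI"]) auto
  qed
qed

lemma upd_comp: "(\<forall>v\<in>V. \<pi> (a v) = a v) \<Longrightarrow> \<pi> \<circ> upd \<theta> V a = upd (\<pi> \<circ> \<theta>) V a"
  by (auto simp: upd_def fun_eq_iff)

lemma opM_ren: "opM U \<theta> G \<Delta> N \<Longrightarrow> (\<forall>n\<in>N. \<pi> n = n) \<Longrightarrow> opM U (\<pi> \<circ> \<theta>) G (ren \<pi> ` \<Delta>) N"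
proof (induct rule: opM.induct)
  case (oE \<theta> G) show ?case using opM.oE by simp
next
  case (oF \<theta> G \<Delta> N A)
  then have "opM U (\<pi> \<circ> \<theta>) G (ren \<pi> ` \<Delta>) N" by blast
  from opM.oF[OF this oF(3)] show ?case by (simp only: image_insert ren_comp)
next
  case (oB \<theta> G \<Delta> N V H a \<Delta>' N')
  then have 1: "opM U (\<pi> \<circ> \<theta>) G (ren \<pi> ` \<Delta>) N" and 2: "opM U (\<pi> \<circ> upd \<theta> V a) H (ren \<pi> ` \<Delta>') N'" by (auto simp: comp_def)
  have "\<pi> \<circ> upd \<theta> V a = upd (\<pi> \<circ> \<theta>) V a" using oB(11) by (intro upd_comp) auto
  with 2 have "opM U (upd (\<pi> \<circ> \<theta>) V a) H (ren \<pi> ` \<Delta>') N'" by simp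
  from opM.oB[OF 1 oB(3,4,5,6) this oB(9,10)] show ?case by (simp add: image_Un comp_def)
qed

lemma fvm_mem: "I \<in># G \<Longrightarrow> fvi I \<subseteq> fvm G"
  by (auto simp: fvm_def)

lemma opM_cong: "opM U \<theta>1 G \<Delta> N \<Longrightarrow> (\<forall>v\<in>fvm G. \<theta>1 v = \<theta>2 v) \<Longrightarrow> opM U \<theta>2 G \<Delta> N"
proof (induct arbitrary: \<theta>2 rule: opM.induct)
  case (oE \<theta> G) show ?case by (rule opM.oE)
next
  case (oF \<theta> G \<Delta> N A)
  then have 1: "opM U \<theta>2 G \<Delta> N" by blast
  have "fv A \<subseteq> fvm G" using oF(3) by (force simp: fvm_def)
  with oF(4) have "ren \<theta> (dbf [] A) = ren \<theta>2 (dbf [] A)" by (intro ren_cong) (auto simp: dfv_dbf)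
  with opM.oF[OF 1 oF(3)] show ?case by simp
next
  case (oB \<theta> G \<Delta> N V H a \<Delta>' N')
  then have 1: "opM U \<theta>2 G \<Delta> N" by blast
  have "\<forall>v\<in>fvm H. upd \<theta> V a v = upd \<theta>2 V a v"
  proof
    fix v assume "v \<in> fvm H"
    show "upd \<theta> V a v = upd \<theta>2 V a v"
    proof (cases "v \<in> V")
      case False
      with \<open>v \<in> fvm H\<close> have "v \<in> fvi (Br V H)" by (simp add: fvm_def)
      with fvm_mem[OF oB(3)] have "v \<in> fvm G" by blast
      with oB(11) False show ?thesis by (simp add: upd_def)
    qed (simp add: upd_def)
  qed
  with oB(8) have "opM U (upd \<theta>2 V a) H \<Delta>' N'" by blast
  from opM.oB[OF 1 oB(3,4,5,6) this oB(9,10)] show ?case .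
qed

lemma opM_vars: "opM U \<theta> G \<Delta> N \<Longrightarrow> D \<in> \<Delta> \<Longrightarrow> dfv D \<subseteq> \<theta> ` cfv G \<union> N"
proof (induct arbitrary: D rule: opM.induct)
  case (oE \<theta> G) then show ?case by simp
next
  case (oF \<theta> G \<Delta> N A)
  have "fv A \<subseteq> cfv G" using oF(3) by (force simp: cfv_def ctx_forms_def)
  show ?case
  proof (cases "D \<in> \<Delta>")
    case True with oF show ?thesis by blast
  next
    case False
    with oF(4) have "D = ren \<theta> (dbf [] A)" by simp
    then have "dfv D = \<theta> ` fv A" by (simp add: dfv_ren dfv_dbf)
    with \<open>fv A \<subseteq> cfv G\<close> show ?thesis by blast
  qed
next
  case (oB \<theta> G \<Delta> N V H a \<Delta>' N')
  show ?case
  proof (cases "D \<in> \<Delta>")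
    case True with oB show ?thesis by blast
  next
    case False
    with oB(11) have "D \<in> \<Delta>'" by simp
    with oB(8) have "dfv D \<subseteq> upd \<theta> V a ` cfv H \<union> N'" by blast
    moreover have "upd \<theta> V a ` cfv H \<subseteq> \<theta> ` cfv G \<union> a ` V"
      using cfv_Br[OF oB(3)] by (auto simp: upd_def)
    ultimately show ?thesis by blast
  qed
qed

lemma opM_empty: "opM U \<theta> {#} \<Delta> N \<Longrightarrow> \<Delta> = {} \<and> N = {}"
  by (induct rule: opM_induct2) auto

lemma opM_split: "opM U \<theta> G \<Delta> N \<Longrightarrow> set_mset G \<subseteq> set_mset A \<union> set_mset B \<Longrightarrow>
  \<exists>\<Delta>1 N1 \<Delta>2 N2. opM U \<theta> A \<Delta>1 N1 \<and> opM U \<theta> B \<Delta>2 N2 \<and> \<Delta> = \<Delta>1 \<union> \<Delta>2 \<and> N = N1 \<union> N2 \<and> N1 \<inter> N2 = {}"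
proof (induct rule: opM_induct2)
  case empty then show ?case using opM.oE by blast
next
  case (add \<Delta> N I \<Delta>I NI)
  then obtain \<Delta>1 N1 \<Delta>2 N2 where h: "opM U \<theta> A \<Delta>1 N1" "opM U \<theta> B \<Delta>2 N2" "\<Delta> = \<Delta>1 \<union> \<Delta>2" "N = N1 \<union> N2" "N1 \<inter> N2 = {}"
    by blast
  show ?case
  proof (cases "I \<in># A")
    case True
    from opD_add[OF h(1) True add(4)] h add(5) have "opM U \<theta> A (\<Delta>1 \<union> \<Delta>I) (N1 \<union> NI)" by blast
    with h add(5) show ?thesis
      by (intro exI[of _ "\<Delta>1 \<union> \<Delta>I"] exI[of _ "N1 \<union> NI"] exI[of _ \<Delta>2] exI[of _ N2]) auto
  next
    case False
    with add(3,6) have "I \<in># B" by auto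
    from opD_add[OF h(2) this add(4)] h add(5) have "opM U \<theta> B (\<Delta>2 \<union> \<Delta>I) (N2 \<union> NI)" by blast
    with h add(5) show ?thesis
      by (intro exI[of _ \<Delta>1] exI[of _ N1] exI[of _ "\<Delta>2 \<union> \<Delta>I"] exI[of _ "N2 \<union> NI"]) auto
  qed
qed

lemma opM_transfer:
  assumes "opM U \<theta> G \<Delta> N"
   and T: "\<And>I \<Delta>I NI. I \<in># G \<Longrightarrow> opD U \<theta> I \<Delta>I NI \<Longrightarrow> \<exists>NI'. NI' \<subseteq> NI \<and> opM U \<theta> G' \<Delta>I NI'"
  shows "\<exists>N'. N' \<subseteq> N \<and> opM U \<theta> G' \<Delta> N'"
  using assms(1)
proof (induct rule: opM_induct2)
  case empty then show ?case by (intro exI[of _ "{}"]) (simp add: opM.oE)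
next
  case (add \<Delta> N I \<Delta>I NI)
  from add(2) obtain N1 where 1: "N1 \<subseteq> N" "opM U \<theta> G' \<Delta> N1" by blast
  from T[OF add(3,4)] obtain N2 where 2: "N2 \<subseteq> NI" "opM U \<theta> G' \<Delta>I N2" by blast
  have "N1 \<inter> N2 = {}" using 1 2 add(5) by blast
  from opM_union[OF 2(2) 1(2) this] have "opM U \<theta> G' (\<Delta> \<union> \<Delta>I) (N1 \<union> N2)" .
  moreover have "N1 \<union> N2 \<subseteq> N \<union> NI" using 1 2 by blast
  ultimately show ?case by blast
qed

lemma opD_Br: "opD U \<theta> (Br V H) \<Delta> N \<longleftrightarrow> (\<exists>a N'. finite V \<and> inj_on a V \<and> a ` V \<inter> U = {} \<and>
        opM U (upd \<theta> V a) H \<Delta> N' \<and> a ` V \<inter> N' = {} \<and> N = N' \<union> a ` V)"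
  by (auto simp: opD_def)

lemma opD_BrI: "finite V \<Longrightarrow> inj_on a V \<Longrightarrow> a ` V \<inter> U = {} \<Longrightarrow> opM U (upd \<theta> V a) H \<Delta> N' \<Longrightarrow>
   a ` V \<inter> N' = {} \<Longrightarrow> opD U \<theta> (Br V H) \<Delta> (N' \<union> a ` V)"
  unfolding opD_def by blast

lemma opD_Fm: "opD U \<theta> (Fm A) \<Delta> N \<longleftrightarrow> \<Delta> = {ren \<theta> (dbf [] A)} \<and> N = {}"
  by (auto simp: opD_def)

lemma fvm_single[simp]: "fvm {#I#} = fvi I"
  by (simp add: fvm_def)

lemma cstep_opM: "cstep G G' \<Longrightarrow> opM U \<theta> G \<Delta> N \<Longrightarrow> \<exists>N'. N' \<subseteq> N \<and> opM U \<theta> G' \<Delta> N'"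
proof (induct arbitrary: \<theta> \<Delta> N rule: cstep.induct)
  case (c_out I V G D)
  show ?case
  proof (rule opM_transfer[OF c_out(2)])
    fix J \<Delta>I NI assume J: "J \<in># add_mset (Br V (add_mset I G)) D" "opD U \<theta> J \<Delta>I NI"
    show "\<exists>NI'. NI' \<subseteq> NI \<and> opM U \<theta> (add_mset I (add_mset (Br V G) D)) \<Delta>I NI'" (is "\<exists>NI'. _ \<and> opM U \<theta> ?T _ _")
    proof (cases "J \<in># D")
      case True
      then have "J \<in># ?T" by simp
      from opD_single[OF this J(2)] show ?thesis by blast
    next
      case False
      with J have "J = Br V (add_mset I G)" by auto
      with J(2) obtain a N'' where a: "finite V" "inj_on a V" "a ` V \<inter> U = {}"
        "opM U (upd \<theta> V a) (add_mset I G) \<Delta>I N''" "a ` V \<inter> N'' = {}" "NI = N'' \<union> a ` V"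
        by (auto simp: opD_Br)
      from opM_split[OF a(4), of "{#I#}" G] obtain \<Delta>1 N1 \<Delta>2 N2 where s:
        "opM U (upd \<theta> V a) {#I#} \<Delta>1 N1" "opM U (upd \<theta> V a) G \<Delta>2 N2" "\<Delta>I = \<Delta>1 \<union> \<Delta>2" "N'' = N1 \<union> N2" "N1 \<inter> N2 = {}"
        by auto
      have "opM U \<theta> {#I#} \<Delta>1 N1"
        by (rule opM_cong[OF s(1)]) (use c_out(1) in \<open>auto simp: upd_def\<close>)
      then have m1: "opM U \<theta> (add_mset I (add_mset (Br V G) D)) \<Delta>1 N1" by (rule opM_mono) auto
      have "opD U \<theta> (Br V G) \<Delta>2 (N2 \<union> a ` V)" using a s by (intro opD_BrI) auto
      then have m2: "opM U \<theta> (add_mset I (add_mset (Br V G) D)) \<Delta>2 (N2 \<union> a ` V)"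
        by (rule opD_single[rotated]) simp
      have d: "N1 \<inter> (N2 \<union> a ` V) = {}" using s a by blast
      from opM_union[OF m2 m1 d] s a have "opM U \<theta> (add_mset I (add_mset (Br V G) D)) \<Delta>I NI"
        by (simp add: Un_assoc)
      then show ?thesis by blast
    qed
  qed
next
  case (c_empty V D)
  show ?case
  proof (rule opM_transfer[OF c_empty])
    fix J \<Delta>I NI assume J: "J \<in># add_mset (Br V {#}) D" "opD U \<theta> J \<Delta>I NI"
    show "\<exists>NI'. NI' \<subseteq> NI \<and> opM U \<theta> D \<Delta>I NI'" (is "\<exists>NI'. _ \<and> opM U \<theta> ?T _ _")
    proof (cases "J \<in># D")
      case True
      then have "J \<in># ?T" by simp
      from opD_single[OF this J(2)] show ?thesis by blast
    next
      case False
      with J have "J = Br V {#}" by auto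
      with J(2) have "\<Delta>I = {}" by (auto simp: opD_Br dest: opM_empty)
      then show ?thesis by (intro exI[of _ "{}"]) (simp add: opM.oE)
    qed
  qed
next
  case (c_dup I D)
  have "opM U \<theta> (add_mset I D) \<Delta> N" by (rule opM_mono[OF c_dup]) auto
  then show ?case by blast
next
  case (c_cong G G' V D)
  show ?case
  proof (rule opM_transfer[OF c_cong(3)])
    fix J \<Delta>I NI assume J: "J \<in># add_mset (Br V G) D" "opD U \<theta> J \<Delta>I NI"
    show "\<exists>NI'. NI' \<subseteq> NI \<and> opM U \<theta> (add_mset (Br V G') D) \<Delta>I NI'" (is "\<exists>NI'. _ \<and> opM U \<theta> ?T _ _")
    proof (cases "J \<in># D")
      case True
      then have "J \<in># ?T" by simp
      from opD_single[OF this J(2)] show ?thesis by blast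
    next
      case False
      with J have "J = Br V G" by auto
      with J(2) obtain a N'' where a: "finite V" "inj_on a V" "a ` V \<inter> U = {}"
        "opM U (upd \<theta> V a) G \<Delta>I N''" "a ` V \<inter> N'' = {}" "NI = N'' \<union> a ` V"
        by (auto simp: opD_Br)
      from c_cong(2)[OF a(4)] obtain N3 where "N3 \<subseteq> N''" "opM U (upd \<theta> V a) G' \<Delta>I N3" by blast
      with a have "opD U \<theta> (Br V G') \<Delta>I (N3 \<union> a ` V)" by (intro opD_BrI) auto
      then have "opM U \<theta> (add_mset (Br V G') D) \<Delta>I (N3 \<union> a ` V)" by (rule opD_single[rotated]) simp
      moreover have "N3 \<union> a ` V \<subseteq> NI" using \<open>N3 \<subseteq> N''\<close> a(6) by blast
      ultimately show ?thesis by blast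
    qed
  qed
qed

lemma csteps_opM: "cstep\<^sup>*\<^sup>* G G' \<Longrightarrow> opM U \<theta> G \<Delta> N \<Longrightarrow> \<exists>N'. N' \<subseteq> N \<and> opM U \<theta> G' \<Delta> N'"
proof (induct arbitrary: \<Delta> N rule: rtranclp_induct)
  case base then show ?case by (meson order_refl)
next
  case (step y z)
  from step.hyps(3)[OF step.prems] obtain N1 where 1: "N1 \<subseteq> N" "opM U \<theta> y \<Delta> N1" by blast
  from cstep_opM[OF step.hyps(2) 1(2)] obtain N2 where "N2 \<subseteq> N1" "opM U \<theta> z \<Delta> N2" by blast
  with 1 show ?case by (meson order_trans)
qed

lemma cstep_forms: "cstep G G' \<Longrightarrow> ctx_forms G' \<subseteq> ctx_forms G"
  by (induct rule: cstep.induct) (auto simp: ctx_forms_def)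

lemma csteps_forms: "cstep\<^sup>*\<^sup>* G G' \<Longrightarrow> ctx_forms G' \<subseteq> ctx_forms G"
  by (induct rule: rtranclp_induct) (use cstep_forms in auto)



definition mu :: "(var \<Rightarrow> var option) \<Rightarrow> (var \<Rightarrow> var) \<Rightarrow> var set \<Rightarrow> var set \<Rightarrow> var \<Rightarrow> var" where
  "mu m b V U n = (case m n of Some v \<Rightarrow> v | None \<Rightarrow> if n \<in> V \<inter> U then b n else n)"

lemma mu_U: "n \<in> U \<Longrightarrow> m n = None \<Longrightarrow> mu m b V U n = upd id V b n"
  by (simp add: mu_def upd_def)

lemma mu_fix: "m n = None \<Longrightarrow> n \<notin> U \<Longrightarrow> mu m b V U n = n"
  by (simp add: mu_def)

lemma opD_fin: "opD U \<theta> I \<Delta> N \<Longrightarrow> finite N"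
  by (auto simp: opD_def dest: opM_fin)

lemma opD_NU: "opD U \<theta> I \<Delta> N \<Longrightarrow> N \<inter> U = {}"
  by (auto simp: opD_def dest: opM_NU)

lemma rot:
  assumes "opM U id G \<Delta> N" "set_mset G \<subseteq> set_mset G0 \<union> {Br V Y}" "cfv G \<subseteq> U"
    "b ` V \<inter> U = {}"
  shows "b ` V \<inter> N = {} \<Longrightarrow> dom m0 \<inter> (N \<union> U) = {} \<Longrightarrow>
     \<exists>m \<Delta>a Na \<Delta>b Nb. opM U (upd id V b) G0 \<Delta>a Na \<and> opM U id Y \<Delta>b Nb \<and> Na \<inter> Nb = {} \<and> Na \<union> Nb \<subseteq> N \<and>
      (\<forall>n\<in>dom m0. m n = m0 n) \<and> dom m \<subseteq> dom m0 \<union> N \<and> (\<forall>D\<in>\<Delta>. ren (mu m b V U) D \<in> \<Delta>a \<union> \<Delta>b)"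
  using assms(1)
proof (induct rule: opM_induct2)
  case empty
  show ?case
    by (rule exI[of _ m0], rule exI[of _ "{}"], rule exI[of _ "{}"], rule exI[of _ "{}"], rule exI[of _ "{}"])
       (auto intro: opM.oE)
next
  case (add \<Delta> N I \<Delta>I NI)
  from add.prems have p1: "b ` V \<inter> N = {}" "dom m0 \<inter> (N \<union> U) = {}" by auto
  from add.hyps(2)[OF p1] obtain m \<Delta>a Na \<Delta>b Nb where IH:
    "opM U (upd id V b) G0 \<Delta>a Na" "opM U id Y \<Delta>b Nb" "Na \<inter> Nb = {}" "Na \<union> Nb \<subseteq> N"
    "\<forall>n\<in>dom m0. m n = m0 n" "dom m \<subseteq> dom m0 \<union> N" "\<forall>D\<in>\<Delta>. ren (mu m b V U) D \<in> \<Delta>a \<union> \<Delta>b"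
    by blast
  have NU: "N \<inter> U = {}" using opM_NU[OF add.hyps(1)] .
  have NIU: "NI \<inter> U = {}" using opD_NU[OF add.hyps(4)] .
  have domU: "\<forall>n\<in>U. m n = None" using IH(6) p1 NU by blast
  have domNI: "\<forall>n\<in>NI. m n = None" using IH(6) add.hyps(5) add.prems by blast
  have cfvI: "\<Union> (fv ` formsi I) \<subseteq> U" using cfv_sub[OF add.hyps(3)] assms(3) by blast
  have muU: "\<forall>n\<in>U. mu m b V U n = upd id V b n" using domU mu_U by blast
  show ?case
  proof (cases I)
    case (Fm A)
    with add.hyps(4) have dI: "\<Delta>I = {dbf [] A}" "NI = {}" by (auto simp: opD_Fm)
    from Fm add.hyps(3) assms(2) have "Fm A \<in># G0" by auto
    from opM.oF[OF IH(1) this] have a1: "opM U (upd id V b) G0 (insert (ren (upd id V b) (dbf [] A)) \<Delta>a) Na" .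
    have "fv A \<subseteq> U" using cfvI Fm by simp
    then have "ren (mu m b V U) (dbf [] A) = ren (upd id V b) (dbf [] A)"
      using muU by (intro ren_cong) (auto simp: dfv_dbf)
    note eq = this
    show ?thesis
      apply (rule exI[of _ m], rule exI[of _ "insert (ren (upd id V b) (dbf [] A)) \<Delta>a"], rule exI[of _ Na],
         rule exI[of _ \<Delta>b], rule exI[of _ Nb])
      using a1 IH dI eq by (auto simp: id_def)
  next
    case (Br V' H)
    with add.hyps(4) obtain a' N'' where a': "finite V'" "inj_on a' V'" "a' ` V' \<inter> U = {}"
      "opM U (upd id V' a') H \<Delta>I N''" "a' ` V' \<inter> N'' = {}" "NI = N'' \<union> a' ` V'"
      by (auto simp: opD_Br)
    have "cfv H \<subseteq> U" using cfvI Br by (auto simp: cfv_def ctx_forms_def)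
    then have cfvH: "fvm H \<subseteq> U" using fvm_cfv[of H] by blast
    have oldD: "\<forall>D\<in>\<Delta>. dfv D \<subseteq> U \<union> N" using opM_vars[OF add.hyps(1)] assms(3) by fastforce
    show ?thesis
    proof (cases "Br V' H = Br V Y")
      case True
      then have VY: "V' = V" "H = Y" by auto
      define m' where "m' = (\<lambda>n. if n \<in> a' ` V then Some (the_inv_into V a' n) else m n)"
      have fixN'': "\<forall>n\<in>N''. mu m' b V U n = n"
      proof
        fix n assume "n \<in> N''"
        then have "n \<notin> a' ` V" "m n = None" "n \<notin> U" using a' VY domNI NIU by auto
        then show "mu m' b V U n = n" by (simp add: mu_def m'_def)
      qed
      from opM_ren[OF a'(4) fixN''] have r: "opM U (mu m' b V U \<circ> upd id V' a') H (ren (mu m' b V U) ` \<Delta>I) N''" .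
      have "\<forall>v\<in>fvm H. (mu m' b V U \<circ> upd id V' a') v = id v"
      proof
        fix v assume "v \<in> fvm H"
        then have vU: "v \<in> U" using cfvH by blast
        show "(mu m' b V U \<circ> upd id V' a') v = id v"
        proof (cases "v \<in> V")
          case True
          then show ?thesis using a'(2) VY by (simp add: upd_def mu_def m'_def the_inv_into_f_f)
        next
          case False
          have "v \<notin> a' ` V" using vU a'(3) VY by blast
          with False vU domU show ?thesis using VY by (simp add: upd_def mu_def m'_def)
        qed
      qed
      from opM_cong[OF r this] VY have r2: "opM U id Y (ren (mu m' b V U) ` \<Delta>I) N''" by (simp add: id_def)
      have d2: "Nb \<inter> N'' = {}" using IH(4) a'(6) add.hyps(5) by blast
      from opM_union[OF r2 IH(2) d2] have b2: "opM U id Y (\<Delta>b \<union> ren (mu m' b V U) ` \<Delta>I) (Nb \<union> N'')" .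
      have agree: "\<forall>n\<in>U \<union> N. mu m' b V U n = mu m b V U n"
      proof
        fix n assume "n \<in> U \<union> N"
        then have "n \<notin> a' ` V" using a'(3,6) VY add.hyps(5) by blast
        then show "mu m' b V U n = mu m b V U n" by (simp add: mu_def m'_def)
      qed
      have old: "\<forall>D\<in>\<Delta>. ren (mu m' b V U) D = ren (mu m b V U) D"
        using oldD agree by (blast intro: ren_cong)
      have m'0: "\<forall>n\<in>dom m0. m' n = m0 n"
      proof
        fix n assume "n \<in> dom m0"
        then have "n \<notin> a' ` V" using add.prems(2) a'(6) VY by blast
        then show "m' n = m0 n" using IH(5) \<open>n \<in> dom m0\<close> by (simp add: m'_def)
      qed
      have "dom m' \<subseteq> dom m \<union> a' ` V" by (auto simp: m'_def split: if_splits)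
      then have dm': "dom m' \<subseteq> dom m0 \<union> (N \<union> NI)" using IH(6) a'(6) VY by blast
      show ?thesis
        apply (rule exI[of _ m'], rule exI[of _ \<Delta>a], rule exI[of _ Na], rule exI[of _ "\<Delta>b \<union> ren (mu m' b V U) ` \<Delta>I"],
           rule exI[of _ "Nb \<union> N''"])
        using IH(1,3,4,7) b2 old m'0 dm' a'(6) add.hyps(5) by (auto simp: id_def)
    next
      case False
      with Br add.hyps(3) assms(2) have inG0: "Br V' H \<in># G0" by auto
      have fixN'': "\<forall>n\<in>N'' \<union> a' ` V'. mu m b V U n = n"
        using domNI NIU a'(6) by (auto intro!: mu_fix)
      from opM_ren[of U "upd id V' a'" H \<Delta>I N'' "mu m b V U"] a'(4) fixN''
      have r: "opM U (mu m b V U \<circ> upd id V' a') H (ren (mu m b V U) ` \<Delta>I) N''" by blast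
      have "\<forall>v\<in>fvm H. (mu m b V U \<circ> upd id V' a') v = upd (upd id V b) V' a' v"
      proof
        fix v assume "v \<in> fvm H"
        then have vU: "v \<in> U" using cfvH by blast
        show "(mu m b V U \<circ> upd id V' a') v = upd (upd id V b) V' a' v"
        proof (cases "v \<in> V'")
          case True
          then show ?thesis using fixN'' by (simp add: upd_def)
        next
          case False
          then show ?thesis using muU vU by (simp add: upd_def)
        qed
      qed
      from opM_cong[OF r this] have r2: "opM U (upd (upd id V b) V' a') H (ren (mu m b V U) ` \<Delta>I) N''" .
      have "opD U (upd id V b) (Br V' H) (ren (mu m b V U) ` \<Delta>I) (N'' \<union> a' ` V')"
        using a' r2 by (intro opD_BrI) auto
      from opD_add[OF IH(1) inG0 this] have a2: "opM U (upd id V b) G0 (\<Delta>a \<union> ren (mu m b V U) ` \<Delta>I) (Na \<union> (N'' \<union> a' ` V'))"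
        using IH(4) add.hyps(5) a'(6) by blast
      show ?thesis
        apply (rule exI[of _ m], rule exI[of _ "\<Delta>a \<union> ren (mu m b V U) ` \<Delta>I"], rule exI[of _ "Na \<union> (N'' \<union> a' ` V')"],
           rule exI[of _ \<Delta>b], rule exI[of _ Nb])
        using IH a2 a'(6) add.hyps(5) by (auto simp: id_def)
    qed
  qed
qed

primrec isize :: "('f,'p) item \<Rightarrow> nat" where
  "isize (Fm A) = 1"
| "isize (Br V G) = Suc (sum_mset (image_mset isize G))"

lemma isize_mem: "J \<in># G \<Longrightarrow> isize J < isize (Br V G)"
  by (auto dest!: multi_member_split)

lemma opD_ren: "opD U \<theta> I \<Delta> N \<Longrightarrow> (\<forall>n\<in>N. \<pi> n = n) \<Longrightarrow> opD U (\<pi> \<circ> \<theta>) I (ren \<pi> ` \<Delta>) N"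
proof (cases I)
  case (Fm A)
  assume "opD U \<theta> I \<Delta> N"
  with Fm show ?thesis by (simp add: opD_Fm ren_comp)
next
  case (Br V H)
  assume a: "opD U \<theta> I \<Delta> N" "\<forall>n\<in>N. \<pi> n = n"
  with Br obtain a N' where h: "finite V" "inj_on a V" "a ` V \<inter> U = {}"
        "opM U (upd \<theta> V a) H \<Delta> N'" "a ` V \<inter> N' = {}" "N = N' \<union> a ` V" by (auto simp: opD_Br)
  from opM_ren[OF h(4)] a(2) h(6) have "opM U (\<pi> \<circ> upd \<theta> V a) H (ren \<pi> ` \<Delta>) N'" by blast
  moreover have "\<pi> \<circ> upd \<theta> V a = upd (\<pi> \<circ> \<theta>) V a" using a(2) h(6) by (intro upd_comp) auto
  ultimately have "opM U (upd (\<pi> \<circ> \<theta>) V a) H (ren \<pi> ` \<Delta>) N'" by simp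
  with h Br show ?thesis by (simp add: opD_BrI)
qed

lemma opD_cong: "opD U \<theta>1 I \<Delta> N \<Longrightarrow> (\<forall>v\<in>fvi I. \<theta>1 v = \<theta>2 v) \<Longrightarrow> opD U \<theta>2 I \<Delta> N"
proof (cases I)
  case (Fm A)
  assume "opD U \<theta>1 I \<Delta> N" "\<forall>v\<in>fvi I. \<theta>1 v = \<theta>2 v"
  with Fm have "\<Delta> = {ren \<theta>1 (dbf [] A)}" "N = {}" "ren \<theta>1 (dbf [] A) = ren \<theta>2 (dbf [] A)"
    by (auto simp: opD_Fm dfv_dbf intro!: ren_cong)
  with Fm show ?thesis by (simp add: opD_Fm)
next
  case (Br V H)
  assume a: "opD U \<theta>1 I \<Delta> N" "\<forall>v\<in>fvi I. \<theta>1 v = \<theta>2 v"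
  with Br obtain a N' where h: "finite V" "inj_on a V" "a ` V \<inter> U = {}"
        "opM U (upd \<theta>1 V a) H \<Delta> N'" "a ` V \<inter> N' = {}" "N = N' \<union> a ` V" by (auto simp: opD_Br)
  have "\<forall>v\<in>fvm H. upd \<theta>1 V a v = upd \<theta>2 V a v"
    using a(2) Br by (auto simp: upd_def fvm_def)
  from opM_cong[OF h(4) this] h Br show ?thesis by (simp add: opD_BrI)
qed

lemma opD_vars: "opD U \<theta> I \<Delta> N \<Longrightarrow> D \<in> \<Delta> \<Longrightarrow> dfv D \<subseteq> \<theta> ` (\<Union> (fv ` formsi I)) \<union> N"
proof -
  assume a: "opD U \<theta> I \<Delta> N" "D \<in> \<Delta>"
  have "I \<in># {#I#}" by simp
  from opM_vars[OF opD_single[OF this a(1)] a(2)] show ?thesis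
    by (simp add: cfv_def)
qed

lemma unnest_Nil[simp]: "unnest [] = {#}"
  by (simp add: unnest_def)

lemma unnest_Cons: "unnest ((A,V)#L) = foldl (\<lambda>acc GV. {# Br (snd GV) (acc + fst GV) #}) {#Br V A#} L"
  by (simp add: unnest_def)

lemma ctx_forms_nest: "ctx_forms (nest L X) = (\<Union>GV\<in>set L. ctx_forms (fst GV)) \<union> ctx_forms X"
  by (induct L) (auto simp del: formsi.simps simp: formsi_Br)

lemma ctx_forms_foldl: "ctx_forms (foldl (\<lambda>acc GV. {# Br (snd GV) (acc + fst GV) #}) A L) =
   ctx_forms A \<union> (\<Union>GV\<in>set L. ctx_forms (fst GV))"
  by (induct L arbitrary: A) (auto simp del: formsi.simps simp: formsi_Br)

lemma ctx_forms_unnest: "ctx_forms (unnest L) = (\<Union>GV\<in>set L. ctx_forms (fst GV))"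
  by (simp add: unnest_def ctx_forms_foldl)



abbreviation VsL :: "(('f,'p) item multiset \<times> var set) list \<Rightarrow> var set" where
  "VsL L \<equiv> (\<Union>GV\<in>set L. snd GV)"

lemma fresh_shift:
  assumes "finite S"
  shows "(\<lambda>v. v + Suc (Max (insert 0 S))) ` V \<inter> S = {}" "inj_on (\<lambda>v::nat. v + Suc (Max (insert 0 S))) V"
proof -
  show "(\<lambda>v. v + Suc (Max (insert 0 S))) ` V \<inter> S = {}"
  proof (rule ccontr)
    assume "(\<lambda>v. v + Suc (Max (insert 0 S))) ` V \<inter> S \<noteq> {}"
    then obtain v where "v + Suc (Max (insert 0 S)) \<in> S" by blast
    then have "v + Suc (Max (insert 0 S)) \<le> Max (insert 0 S)" using assms by simp
    then show False by simp
  qed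
  show "inj_on (\<lambda>v::nat. v + Suc (Max (insert 0 S))) V" by (rule inj_onI) simp
qed

lemma focus:
  "isize I < n \<Longrightarrow> opM U id G \<Delta>r Nr \<Longrightarrow> I \<in># G \<Longrightarrow> opD U id I \<Delta>I NI \<Longrightarrow> Nr \<inter> NI = {} \<Longrightarrow> D \<in> \<Delta>I \<Longrightarrow>
   cfv G \<subseteq> U \<Longrightarrow> finite U \<Longrightarrow>
   \<exists>L Gi F' \<theta>' \<mu> \<Delta>' N'. G = nest L (add_mset (Fm F') Gi) \<and>
     (L = [] \<longrightarrow> I = Fm F') \<and> (\<forall>H1 V2 L3. L = (H1,V2)#L3 \<longrightarrow> I = Br V2 (nest L3 (add_mset (Fm F') Gi))) \<and>
     opM U id (unnest L + Gi + {#Fm F'#}) \<Delta>' N' \<and> ren \<mu> ` (\<Delta>r \<union> \<Delta>I) \<subseteq> \<Delta>' \<and> ren \<mu> D = dbf [] F' \<and>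
     D = ren \<theta>' (dbf [] F') \<and> (\<forall>v\<in>U. (v \<in> VsL L \<longrightarrow> \<theta>' v \<notin> U) \<and> (v \<notin> VsL L \<longrightarrow> \<theta>' v = v))"
proof (induct n arbitrary: G \<Delta>r Nr I \<Delta>I NI D)
  case 0 then show ?case by simp
next
  case (Suc n)
  have p2: "opM U id G \<Delta>r Nr" using Suc.prems(2) by (simp add: id_def)
  have p4: "opD U id I \<Delta>I NI" using Suc.prems(4) by (simp add: id_def)
  show ?case
  proof (cases I)
    case (Fm A)
    with p4 have dI: "\<Delta>I = {dbf [] A}" "NI = {}" by (auto simp: opD_Fm)
    with Suc.prems(6) have DA: "D = dbf [] A" by simp
    have GA: "G = add_mset (Fm A) (G - {#Fm A#})" using Suc.prems(3) Fm by simp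
    from opD_add[OF p2 Suc.prems(3) p4 Suc.prems(5)] have op: "opM U id G (\<Delta>r \<union> \<Delta>I) (Nr \<union> NI)" .
    show ?thesis
      apply (rule exI[of _ "[]"], rule exI[of _ "G - {#Fm A#}"], rule exI[of _ A], rule exI[of _ id],
         rule exI[of _ id], rule exI[of _ "\<Delta>r \<union> \<Delta>I"], rule exI[of _ "Nr \<union> NI"])
      using GA op Fm DA by (simp add: id_def)
  next
    case (Br V Y)
    from p4[unfolded Br opD_Br] obtain a NY where a: "finite V" "inj_on a V" "a ` V \<inter> U = {}"
        "opM U (upd id V a) Y \<Delta>I NY" "a ` V \<inter> NY = {}" "NI = NY \<union> a ` V" by blast
    from opM_locate[OF a(4) Suc.prems(6)] obtain J \<Delta>J NJ \<Delta>r' Nr' where J: "J \<in># Y"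
      "opD U (upd id V a) J \<Delta>J NJ" "D \<in> \<Delta>J" "opM U (upd id V a) Y \<Delta>r' Nr'" "\<Delta>I = \<Delta>r' \<union> \<Delta>J"
      "NY = Nr' \<union> NJ" "Nr' \<inter> NJ = {}" by blast
    define G0 where "G0 = G - {#Br V Y#}"
    have GG0: "G = add_mset (Br V Y) G0" using Suc.prems(3) Br by (simp add: G0_def)
    have finNr: "finite Nr" using opM_fin[OF p2] .
    have finNI: "finite NI" using opD_fin[OF p4] .
    define S where "S = U \<union> Nr \<union> NI"
    have finS: "finite S" using finNr finNI Suc.prems(8) by (simp add: S_def)
    define b where "b = (\<lambda>v::nat. v + Suc (Max (insert 0 S)))"
    have bS: "b ` V \<inter> S = {}" and binj: "inj_on b V" using fresh_shift[OF finS] by (auto simp: b_def)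
    define m0 where "m0 = (\<lambda>n. if n \<in> a ` V then Some (the_inv_into V a n) else None)"
    have dm0: "dom m0 = a ` V" by (auto simp: m0_def split: if_splits)
    have NrU: "Nr \<inter> U = {}" using opM_NU[OF p2] .
    have NIU: "NI \<inter> U = {}" using opD_NU[OF p4] .
    have "set_mset G \<subseteq> set_mset G0 \<union> {Br V Y}" using GG0 by auto
    note r0 = this
    have r1: "b ` V \<inter> U = {}" "b ` V \<inter> Nr = {}" using bS by (auto simp: S_def)
    have r3: "dom m0 \<inter> (Nr \<union> U) = {}" using dm0 a(3,6) Suc.prems(5) by blast
    from rot[OF p2 r0 Suc.prems(7) r1(1) r1(2) r3]
    obtain m \<Delta>a Na \<Delta>b Nb where R: "opM U (upd id V b) G0 \<Delta>a Na" "opM U id Y \<Delta>b Nb" "Na \<inter> Nb = {}"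
      "Na \<union> Nb \<subseteq> Nr" "\<forall>n\<in>dom m0. m n = m0 n" "dom m \<subseteq> dom m0 \<union> Nr"
      "\<forall>D\<in>\<Delta>r. ren (mu m b V U) D \<in> \<Delta>a \<union> \<Delta>b"
      by blast
    define \<mu>1 where "\<mu>1 = mu m b V U"
    have mu_a: "\<forall>v\<in>V. \<mu>1 (a v) = v"
    proof
      fix v assume "v \<in> V"
      then have "a v \<in> dom m0" using dm0 by blast
      with R(5) have "m (a v) = m0 (a v)" by blast
      also have "\<dots> = Some v" using \<open>v \<in> V\<close> a(2) by (simp add: m0_def the_inv_into_f_f)
      finally show "\<mu>1 (a v) = v" by (simp add: \<mu>1_def mu_def)
    qed
    have mu_NY: "\<forall>n\<in>NY. \<mu>1 n = n"
    proof
      fix n assume "n \<in> NY"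
      then have "n \<notin> dom m" "n \<notin> U" using R(6) dm0 a(5,6) Suc.prems(5) NIU by blast+
      then show "\<mu>1 n = n" by (simp add: \<mu>1_def mu_def domIff)
    qed
    have mu_U: "\<forall>v\<in>U. v \<notin> V \<longrightarrow> \<mu>1 v = v"
    proof (intro ballI impI)
      fix v assume "v \<in> U" "v \<notin> V"
      then have "v \<notin> dom m" using R(6) dm0 a(3) NrU by blast
      with \<open>v \<notin> V\<close> show "\<mu>1 v = v" by (simp add: \<mu>1_def mu_def domIff)
    qed
    have muid: "\<forall>v\<in>U. (\<mu>1 \<circ> upd id V a) v = id v"
      using mu_a mu_U by (auto simp: upd_def)
    have cfvY: "cfv Y \<subseteq> U" using cfv_Br[of V Y G] Suc.prems(3,7) Br by auto
    have fvmY: "fvm Y \<subseteq> U" using fvm_cfv[of Y] cfvY by blast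
    define G' where "G' = add_mset (Br V G0) Y"
    have ctxG': "ctx_forms G' = ctx_forms G" using GG0 by (simp add: G'_def formsi_Br Un_commute del: formsi.simps)
    have cfvG': "cfv G' \<subseteq> U" using Suc.prems(7) ctxG' by (simp add: cfv_def)
    have "opD U id (Br V G0) \<Delta>a (Na \<union> b ` V)"
      using opD_BrI[OF a(1) binj _ R(1)] bS R(4) by (auto simp: S_def)
    then have g1: "opM U id G' \<Delta>a (Na \<union> b ` V)" by (rule opD_single[rotated]) (simp add: G'_def)
    have g2: "opM U id G' \<Delta>b Nb" by (rule opM_mono[OF R(2)]) (auto simp: G'_def)
    have "\<forall>n\<in>Nr'. \<mu>1 n = n" using mu_NY J(6) by blast
    from opM_ren[OF J(4) this] have "opM U (\<mu>1 \<circ> upd id V a) Y (ren \<mu>1 ` \<Delta>r') Nr'" .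
    from opM_cong[OF this, of id] muid fvmY have "opM U id Y (ren \<mu>1 ` \<Delta>r') Nr'" by blast
    then have g3: "opM U id G' (ren \<mu>1 ` \<Delta>r') Nr'" by (rule opM_mono) (auto simp: G'_def)
    have "\<forall>n\<in>NJ. \<mu>1 n = n" using mu_NY J(6) by blast
    from opD_ren[OF J(2) this] have oJ: "opD U (\<mu>1 \<circ> upd id V a) J (ren \<mu>1 ` \<Delta>J) NJ" .
    have "fvi J \<subseteq> U" using fvm_mem[OF J(1)] fvmY by blast
    then have "\<forall>v\<in>fvi J. (\<mu>1 \<circ> upd id V a) v = id v" using muid by blast
    from opD_cong[OF oJ this] have gJ: "opD U id J (ren \<mu>1 ` \<Delta>J) NJ" .
    have d12: "(Na \<union> b ` V) \<inter> Nb = {}" using R(3,4) bS by (auto simp: S_def)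
    from opM_union[OF g2 g1 d12] have g12: "opM U id G' (\<Delta>a \<union> \<Delta>b) (Na \<union> b ` V \<union> Nb)" .
    have d3: "(Na \<union> b ` V \<union> Nb) \<inter> Nr' = {}" using R(4) bS Suc.prems(5) a(6) J(6) by (auto simp: S_def)
    from opM_union[OF g3 g12 d3] have grest: "opM U id G' (\<Delta>a \<union> \<Delta>b \<union> ren \<mu>1 ` \<Delta>r') (Na \<union> b ` V \<union> Nb \<union> Nr')" .
    have dJ: "(Na \<union> b ` V \<union> Nb \<union> Nr') \<inter> NJ = {}" using R(4) bS Suc.prems(5) a(6) J(6,7) by (auto simp: S_def)
    have JG': "J \<in># G'" using J(1) by (simp add: G'_def)
    have sJ: "isize J < n" using isize_mem[OF J(1), of V] Suc.prems(1) Br by simp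
    have DJ: "ren \<mu>1 D \<in> ren \<mu>1 ` \<Delta>J" using J(3) by blast
    from Suc.hyps[OF sJ grest JG' gJ dJ DJ cfvG' Suc.prems(8)]
    obtain L' Gi F' \<theta>'' \<mu>2 \<Delta>' N' where IH: "G' = nest L' (add_mset (Fm F') Gi)"
      "L' = [] \<longrightarrow> J = Fm F'" "\<forall>H1 V2 L3. L' = (H1,V2)#L3 \<longrightarrow> J = Br V2 (nest L3 (add_mset (Fm F') Gi))"
      "opM U id (unnest L' + Gi + {#Fm F'#}) \<Delta>' N'"
      "ren \<mu>2 ` ((\<Delta>a \<union> \<Delta>b \<union> ren \<mu>1 ` \<Delta>r') \<union> ren \<mu>1 ` \<Delta>J) \<subseteq> \<Delta>'"
      "ren \<mu>2 (ren \<mu>1 D) = dbf [] F'" "ren \<mu>1 D = ren \<theta>'' (dbf [] F')"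
      "\<forall>v\<in>U. (v \<in> VsL L' \<longrightarrow> \<theta>'' v \<notin> U) \<and> (v \<notin> VsL L' \<longrightarrow> \<theta>'' v = v)"
      apply - apply (elim exE conjE) apply (rule that) apply assumption+ done
    define \<nu> where "\<nu> = upd id (V \<inter> U) a"
    define \<theta>' where "\<theta>' = \<nu> \<circ> \<theta>''"
    define \<mu> where "\<mu> = \<mu>2 \<circ> \<mu>1"
    have muD: "ren \<mu> D = dbf [] F'" using IH(6) by (simp add: \<mu>_def ren_comp)
    have muInc: "ren \<mu> ` (\<Delta>r \<union> \<Delta>I) \<subseteq> \<Delta>'"
    proof
      fix X assume "X \<in> ren \<mu> ` (\<Delta>r \<union> \<Delta>I)"
      then obtain E where E: "E \<in> \<Delta>r \<union> \<Delta>I" "X = ren \<mu>2 (ren \<mu>1 E)" by (auto simp: \<mu>_def ren_comp)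
      have "ren \<mu>1 E \<in> (\<Delta>a \<union> \<Delta>b \<union> ren \<mu>1 ` \<Delta>r') \<union> ren \<mu>1 ` \<Delta>J"
        using E(1) R(7) J(5) by (auto simp: \<mu>1_def)
      with IH(5) E(2) show "X \<in> \<Delta>'" by blast
    qed
    have Dvars: "dfv D \<subseteq> upd id V a ` U \<union> NJ"
      using opD_vars[OF J(2,3)] cfv_sub[OF J(1)] cfvY by blast
    have nm: "\<forall>n\<in>dfv D. \<nu> (\<mu>1 n) = n"
    proof
      fix n assume "n \<in> dfv D"
      with Dvars consider (u) u where "u \<in> U" "n = upd id V a u" | (j) "n \<in> NJ" by blast
      then show "\<nu> (\<mu>1 n) = n"
      proof cases
        case u
        show ?thesis
        proof (cases "u \<in> V")
          case True with u mu_a show ?thesis by (simp add: upd_def \<nu>_def)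
        next
          case False with u mu_U show ?thesis by (simp add: upd_def \<nu>_def)
        qed
      next
        case j
        then have "n \<notin> U" using NIU a(6) J(6) by blast
        with j mu_NY J(6) show ?thesis by (simp add: upd_def \<nu>_def)
      qed
    qed
    have thD: "D = ren \<theta>' (dbf [] F')"
    proof -
      have "ren \<theta>' (dbf [] F') = ren \<nu> (ren \<theta>'' (dbf [] F'))" by (simp add: \<theta>'_def ren_comp)
      also have "\<dots> = ren \<nu> (ren \<mu>1 D)" using IH(7) by simp
      also have "\<dots> = ren (\<nu> \<circ> \<mu>1) D" by (simp add: ren_comp)
      also have "\<dots> = ren id D" using nm by (intro ren_cong) auto
      finally show ?thesis by simp
    qed
    have nuU: "\<forall>n. n \<notin> U \<longrightarrow> \<nu> n = n" by (simp add: \<nu>_def upd_def)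
    have thprop: "\<forall>v\<in>U. (v \<in> V \<union> VsL L' \<longrightarrow> \<theta>' v \<notin> U) \<and> (v \<notin> V \<union> VsL L' \<longrightarrow> \<theta>' v = v)"
    proof
      fix v assume vU: "v \<in> U"
      show "(v \<in> V \<union> VsL L' \<longrightarrow> \<theta>' v \<notin> U) \<and> (v \<notin> V \<union> VsL L' \<longrightarrow> \<theta>' v = v)"
      proof (cases "v \<in> VsL L'")
        case True
        with IH(8) vU have "\<theta>'' v \<notin> U" by blast
        with nuU True show ?thesis by (simp add: \<theta>'_def)
      next
        case False
        with IH(8) vU have t: "\<theta>'' v = v" by blast
        show ?thesis
        proof (cases "v \<in> V")
          case True
          with vU a(3) have "a v \<notin> U" by blast
          with True vU t show ?thesis by (simp add: \<theta>'_def \<nu>_def upd_def)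
        next
          case False
          with t \<open>v \<notin> VsL L'\<close> show ?thesis by (simp add: \<theta>'_def \<nu>_def upd_def)
        qed
      qed
    qed
    show ?thesis
    proof (cases L')
      case Nil
      with IH(1,2) have JF: "J = Fm F'" and G'eq: "G' = add_mset (Fm F') Gi" by auto
      define Gn where "Gn = Y - {#Fm F'#}"
      have YF: "Y = add_mset (Fm F') Gn" using J(1) JF by (simp add: Gn_def)
      have Geq: "G = nest [(G0,V)] (add_mset (Fm F') Gn)" using GG0 YF by simp
      have Ueq: "unnest [(G0,V)] + Gn + {#Fm F'#} = unnest L' + Gi + {#Fm F'#}"
        using Nil G'eq YF by (simp add: unnest_def G'_def)
      show ?thesis
        apply (rule exI[of _ "[(G0,V)]"], rule exI[of _ Gn], rule exI[of _ F'], rule exI[of _ \<theta>'],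
           rule exI[of _ \<mu>], rule exI[of _ \<Delta>'], rule exI[of _ N'])
        using Geq Ueq IH(4) muInc muD thD thprop Nil Br YF by (auto simp: id_def)
    next
      case (Cons GV L3)
      obtain H1 V2 where GV: "GV = (H1, V2)" by fastforce
      with IH(3) Cons have JB: "J = Br V2 (nest L3 (add_mset (Fm F') Gi))" by blast
      from IH(1) Cons GV JB have G'eq: "G' = H1 + {#J#}" by simp
      have H1eq: "H1 = add_mset (Br V G0) (Y - {#J#})"
      proof -
        have "H1 = G' - {#J#}" using G'eq by simp
        also have "\<dots> = add_mset (Br V G0) (Y - {#J#})" using J(1) by (simp add: G'_def diff_union_single_conv)
        finally show ?thesis .
      qed
      define L where "L = (G0, V) # (Y - {#J#}, V2) # L3"
      have YJ: "Y = (Y - {#J#}) + {#J#}" using J(1) by simp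
      have Geq: "G = nest L (add_mset (Fm F') Gi)" using GG0 JB YJ by (simp add: L_def)
      have Ueq: "unnest L = unnest L'" using Cons GV H1eq by (simp add: L_def unnest_Cons)
      have VsEq: "VsL L = V \<union> VsL L'" using Cons GV by (auto simp: L_def)
      have IB: "I = Br V (nest ((Y - {#J#}, V2) # L3) (add_mset (Fm F') Gi))" using Br JB YJ by simp
      show ?thesis
        apply (rule exI[of _ L], rule exI[of _ Gi], rule exI[of _ F'], rule exI[of _ \<theta>'],
           rule exI[of _ \<mu>], rule exI[of _ \<Delta>'], rule exI[of _ N'])
        using Geq Ueq IH(4) muInc muD thD thprop VsEq IB by (auto simp: L_def id_def)
    qed
  qed
qed



definition allv :: "('f,'p) form \<Rightarrow> var set" where
  "allv A = fv A \<union> set (bvl A)"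

lemma wf_Imp: "wf_vars (Imp A B) \<Longrightarrow> wf_vars A \<and> wf_vars B"
  by (auto simp: wf_vars_def)

lemma wf_All: "wf_vars (All y B) \<Longrightarrow> wf_vars B"
  by (auto simp: wf_vars_def)

lemma wf_foldr: "wf_vars (foldr Imp As P) \<Longrightarrow> a \<in> set As \<Longrightarrow> wf_vars a"
  by (induct As) (auto dest: wf_Imp)

lemma neg_foldr: "neg (foldr Imp As P) \<Longrightarrow> a \<in> set As \<Longrightarrow> pos a"
  by (induct As) auto

lemma allv_Imp: "allv A \<subseteq> allv (Imp A B)" "allv B \<subseteq> allv (Imp A B)"
  by (auto simp: allv_def)

lemma allv_All: "allv B \<subseteq> allv (All y B)"
  by (auto simp: allv_def)

lemma allv_foldr: "a \<in> set As \<Longrightarrow> allv a \<subseteq> allv (foldr Imp As P)"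
  by (induct As) (auto simp: allv_def)

lemma foldr_Imp_inj: "foldr Imp xs (Atom p ts) = foldr Imp ys (Atom q us) \<Longrightarrow> xs = ys"
proof (induct xs arbitrary: ys)
  case Nil then show ?case by (cases ys) auto
next
  case (Cons x xs) then show ?case by (cases ys) auto
qed

lemma finite_fvt: "finite (fvt t)"
  by (induct t) auto

lemma finite_fv: "finite (fv A)"
  by (induct A) (auto simp: fvts_def finite_fvt)

lemma finite_allv: "finite (allv A)"
  by (simp add: allv_def finite_fv)

lemma rel_mset_memD: "rel_mset R M N \<Longrightarrow> x \<in># M \<Longrightarrow> \<exists>y. y \<in># N \<and> R x y"
proof -
  assume "rel_mset R M N" "x \<in># M"
  then obtain xs ys where h: "M = mset xs" "N = mset ys" "list_all2 R xs ys" by (auto simp: rel_mset_def)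
  with \<open>x \<in># M\<close> obtain i where "i < length xs" "xs ! i = x" by (auto simp: in_set_conv_nth)
  with h show ?thesis by (metis list_all2_conv_all_nth nth_mem set_mset_mset)
qed

lemma terms_eq:
  assumes "map (rent \<theta> \<circ> dbt []) xs = map (rent \<sigma> \<circ> dbt []) ts" "map (rent \<sigma> \<circ> dbt []) ts = map (dbt []) ys"
    "fvts xs \<subseteq> U" "fvts ys \<subseteq> U" "\<forall>v\<in>U. \<theta> v \<in> U \<longrightarrow> \<theta> v = v \<and> v \<notin> W"
  shows "xs = ys \<and> fvts xs \<inter> W = {}"
proof -
  have e: "map (rent \<theta> \<circ> dbt []) xs = map (dbt []) ys" using assms(1,2) by simp
  then have len: "length xs = length ys" by (metis length_map)
  have ok: "\<forall>i<length xs. xs ! i = ys ! i \<and> fvt (xs ! i) \<inter> W = {}"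
  proof (intro allI impI)
    fix i assume i: "i < length xs"
    from e i len have ei: "rent \<theta> (dbt [] (xs!i)) = dbt [] (ys!i)" by (metis comp_apply nth_map)
    have xU: "fvt (xs!i) \<subseteq> U" using assms(3) nth_mem[OF i] by (auto simp: fvts_def)
    have "ys ! i \<in> set ys" using i len by simp
    then have yU: "fvt (ys!i) \<subseteq> U" using assms(4) by (auto simp: fvts_def)
    have img: "\<theta> ` fvt (xs!i) = fvt (ys!i)"
      using arg_cong[OF ei, of dfvt] by (simp add: dfvt_rent dfvt_dbt)
    have th: "\<forall>v\<in>fvt (xs!i). \<theta> v = v \<and> v \<notin> W" using img yU xU assms(5) by blast
    then have "rent \<theta> (dbt [] (xs!i)) = rent id (dbt [] (xs!i))"
      by (intro rent_cong) (simp add: dfvt_dbt)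
    with ei have "dbt [] (xs!i) = dbt [] (ys!i)" by simp
    then have "xs!i = ys!i" by (rule dbt_nil_inj)
    with th show "xs ! i = ys ! i \<and> fvt (xs ! i) \<inter> W = {}" by blast
  qed
  from ok len have "xs = ys" by (simp add: list_eq_iff_nth_eq)
  moreover have "fvts xs \<inter> W = {}"
  proof -
    have "\<forall>t\<in>set xs. fvt t \<inter> W = {}"
    proof
      fix t assume "t \<in> set xs"
      then obtain i where "i < length xs" "t = xs ! i" by (auto simp: in_set_conv_nth)
      with ok show "fvt t \<inter> W = {}" by blast
    qed
    then show ?thesis by (auto simp: fvts_def)
  qed
  ultimately show ?thesis by blast
qed

lemma normal_empty: "normal {#}"
  unfolding normal_def by (auto elim: cstep.cases)



lemma ctx_nf: "nf_strategy nf \<Longrightarrow> ctx_forms (nf X) \<subseteq> ctx_forms X"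
  unfolding nf_strategy_def using csteps_forms by blast

lemma opM_nf: "nf_strategy nf \<Longrightarrow> opM U \<theta> X \<Delta> N \<Longrightarrow> \<exists>N'. opM U \<theta> (nf X) \<Delta> N'"
  unfolding nf_strategy_def using csteps_opM by blast

lemma normal_nf: "nf_strategy nf \<Longrightarrow> normal (nf X)"
  unfolding nf_strategy_def by blast

lemma cfv_allv: "\<forall>C\<in>ctx_forms G. allv C \<subseteq> U \<Longrightarrow> cfv G \<subseteq> U"
  by (auto simp: cfv_def allv_def)

lemma main:
  assumes nfs: "nf_strategy nf" and finU: "finite U"
  shows "ljp \<Gamma> A \<Longrightarrow> (\<forall>\<sigma> G B \<Delta> N. ljb_seq G B \<and> (\<forall>C\<in>ctx_forms G. allv C \<subseteq> U) \<and> allv B \<subseteq> U \<and>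
     opM U id G \<Delta> N \<and> (\<forall>D\<in>#\<Gamma>. ren \<sigma> (dbf [] D) \<in> \<Delta>) \<and> ren \<sigma> (dbf [] A) = dbf [] B \<longrightarrow> ljb nf G B)"
proof (induct rule: ljp.induct)
  case (lj_imp_L F As p ts \<Gamma>)
  show ?case
  proof (intro allI impI, elim conjE)
    fix \<sigma> G B \<Delta> N
    assume H: "ljb_seq G B" "\<forall>C\<in>ctx_forms G. allv C \<subseteq> U" "allv B \<subseteq> U" "opM U id G \<Delta> N"
      "\<forall>D\<in>#add_mset F \<Gamma>. ren \<sigma> (dbf [] D) \<in> \<Delta>" "ren \<sigma> (dbf [] (Atom p ts)) = dbf [] B"
    from atom_inv[of \<sigma> p ts id B] H(6) obtain us where Bu: "B = Atom p us"
      "map (rent \<sigma> \<circ> dbt []) ts = map (rent id \<circ> dbt []) us" by auto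
    have Bu2: "map (rent \<sigma> \<circ> dbt []) ts = map (dbt []) us" using Bu(2) by (simp add: comp_def)
    define DF where "DF = ren \<sigma> (dbf [] F)"
    have DFin: "DF \<in> \<Delta>" using H(5) by (simp add: DF_def)
    from opM_locate[OF H(4) DFin] obtain I \<Delta>I NI \<Delta>r Nr where Lc: "I \<in># G" "opD U id I \<Delta>I NI" "DF \<in> \<Delta>I"
      "opM U id G \<Delta>r Nr" "\<Delta> = \<Delta>r \<union> \<Delta>I" "N = Nr \<union> NI" "Nr \<inter> NI = {}" by blast
    have cfvG: "cfv G \<subseteq> U" using H(2) by (rule cfv_allv)
    have "isize I < Suc (isize I)" by simp
    from focus[OF this Lc(4,1,2,7,3) cfvG finU]
    obtain L Gi F' \<theta>' \<mu> \<Delta>' N' where Fo: "G = nest L (add_mset (Fm F') Gi)"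
      "opM U id (unnest L + Gi + {#Fm F'#}) \<Delta>' N'" "ren \<mu> ` (\<Delta>r \<union> \<Delta>I) \<subseteq> \<Delta>'" "ren \<mu> DF = dbf [] F'"
      "DF = ren \<theta>' (dbf [] F')" "\<forall>v\<in>U. (v \<in> VsL L \<longrightarrow> \<theta>' v \<notin> U) \<and> (v \<notin> VsL L \<longrightarrow> \<theta>' v = v)"
      apply - apply (elim exE conjE) apply (rule that) apply assumption+ done
    have F'ctx: "F' \<in> ctx_forms G" using Fo(1) by (simp add: ctx_forms_nest)
    from foldr_inv[of \<sigma> As p ts \<theta>' F'] Fo(5) lj_imp_L(1) DF_def obtain As' us' where F'eq:
      "F' = foldr Imp As' (Atom p us')" "map (rent \<sigma> \<circ> dbt []) ts = map (rent \<theta>' \<circ> dbt []) us'"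
      by auto
    have "fvts us' \<subseteq> fv F'" unfolding F'eq(1) by (induct As') auto
    then have us'U: "fvts us' \<subseteq> U" using H(2) F'ctx by (auto simp: allv_def)
    have usU: "fvts us \<subseteq> U" using H(3) Bu(1) by (auto simp: allv_def)
    have "\<forall>v\<in>U. \<theta>' v \<in> U \<longrightarrow> \<theta>' v = v \<and> v \<notin> VsL L" using Fo(6) by blast
    from terms_eq[OF F'eq(2)[symmetric] Bu2 us'U usU this] have TE: "us' = us" "fvts us \<inter> VsL L = {}" by auto
    have "ren (\<mu> \<circ> \<sigma>) (dbf [] (foldr Imp As (Atom p ts))) = ren id (dbf [] F')"
      using Fo(4) lj_imp_L(1) by (simp add: DF_def ren_comp)
    from foldr_inv[OF this] obtain As'' us'' where A2: "F' = foldr Imp As'' (Atom p us'')"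
      "list_all2 (\<lambda>a a'. ren (\<mu> \<circ> \<sigma>) (dbf [] a) = ren id (dbf [] a')) As As''" by blast
    have "As'' = As'" using A2(1) F'eq(1) foldr_Imp_inj by metis
    with A2(2) have rel: "list_all2 (\<lambda>a a'. ren (\<mu> \<circ> \<sigma>) (dbf [] a) = dbf [] a') As As'" by simp
    define X where "X = unnest L + Gi + {#Fm F'#}"
    from opM_nf[OF nfs Fo(2)[folded X_def]] obtain N3 where op3: "opM U id (nf X) \<Delta>' N3" by blast
    have ctxX: "ctx_forms X = ctx_forms G" using Fo(1) by (auto simp: X_def ctx_forms_unnest ctx_forms_nest)
    have ctx3: "ctx_forms (nf X) \<subseteq> ctx_forms G" using ctx_nf[OF nfs, of X] ctxX by simp
    have wfF': "wf_vars F'" "neg F'" using H(1) F'ctx by (auto simp: ljb_seq_def)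
    have prem: "\<forall>a'\<in>set As'. ljb nf (nf X) a'"
    proof
      fix a' assume "a' \<in> set As'"
      then obtain k where k: "k < length As'" "a' = As' ! k" by (auto simp: in_set_conv_nth)
      from rel k have kk: "k < length As" "ren (\<mu> \<circ> \<sigma>) (dbf [] (As ! k)) = dbf [] a'"
        by (auto simp: list_all2_conv_all_nth)
      have aIn: "As ! k \<in> set As" using kk(1) by simp
      with lj_imp_L(3) have IH: "\<forall>\<sigma> G B \<Delta> N. ljb_seq G B \<and> (\<forall>C\<in>ctx_forms G. allv C \<subseteq> U) \<and> allv B \<subseteq> U \<and>
         opM U id G \<Delta> N \<and> (\<forall>D\<in>#add_mset F \<Gamma>. ren \<sigma> (dbf [] D) \<in> \<Delta>) \<and> ren \<sigma> (dbf [] (As ! k)) = dbf [] B \<longrightarrow>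
         ljb nf G B" by blast
      have seq: "ljb_seq (nf X) a'"
        using H(1) ctx3 normal_nf[OF nfs] wf_foldr[OF wfF'(1)[unfolded F'eq(1)] \<open>a' \<in> set As'\<close>]
          neg_foldr[OF wfF'(2)[unfolded F'eq(1)] \<open>a' \<in> set As'\<close>]
        by (auto simp: ljb_seq_def)
      have allv3: "\<forall>C\<in>ctx_forms (nf X). allv C \<subseteq> U" using ctx3 H(2) by blast
      have allva: "allv a' \<subseteq> U" using H(2) F'ctx allv_foldr[OF \<open>a' \<in> set As'\<close>, of "Atom p us'"] F'eq(1) by blast
      have memG: "\<forall>D\<in>#add_mset F \<Gamma>. ren (\<mu> \<circ> \<sigma>) (dbf [] D) \<in> \<Delta>'"
      proof
        fix D assume "D \<in># add_mset F \<Gamma>"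
        with H(5) have "ren \<sigma> (dbf [] D) \<in> \<Delta>r \<union> \<Delta>I" using Lc(5) by blast
        with Fo(3) have "ren \<mu> (ren \<sigma> (dbf [] D)) \<in> \<Delta>'" by blast
        then show "ren (\<mu> \<circ> \<sigma>) (dbf [] D) \<in> \<Delta>'" by (simp add: ren_comp)
      qed
      from IH[THEN spec[of _ "\<mu> \<circ> \<sigma>"], THEN spec[of _ "nf X"], THEN spec[of _ a'], THEN spec[of _ \<Delta>'], THEN spec[of _ N3]]
        seq allv3 allva op3 memG kk(2)
      show "ljb nf (nf X) a'" by blast
    qed
    have seqG: "ljb_seq G (Atom p us)" using H(1) Bu(1) by simp
    from ljb_imp_L[OF F'eq(1)[unfolded TE(1)] Fo(1) seqG TE(2)] prem[unfolded X_def] Bu(1)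
    show "ljb nf G B" by simp
  qed
next
  case (lj_all_R \<Gamma> A x)
  show ?case
  proof (intro allI impI, elim conjE)
    fix \<sigma> G B \<Delta> N
    assume H: "ljb_seq G B" "\<forall>C\<in>ctx_forms G. allv C \<subseteq> U" "allv B \<subseteq> U" "opM U id G \<Delta> N"
      "\<forall>D\<in>#\<Gamma>. ren \<sigma> (dbf [] D) \<in> \<Delta>" "ren \<sigma> (dbf [] (All x A)) = dbf [] B"
    from all_inv[OF H(6)] obtain y B0 where B: "B = All y B0" "ren (\<sigma>(x:=y)) (dbf [] A) = dbf [] B0" by blast
    define V where "V = set (bvl (All y B0))"
    have finV: "finite V" by (simp add: V_def)
    have VU: "V \<subseteq> U" using H(3) B(1) by (auto simp: V_def allv_def)
    have finN: "finite N" using opM_fin[OF H(4)] .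
    define S where "S = U \<union> N"
    have finS: "finite S" using finU finN by (simp add: S_def)
    define a where "a = (\<lambda>v::nat. v + Suc (Max (insert 0 S)))"
    have aS: "a ` V \<inter> S = {}" and ainj: "inj_on a V" using fresh_shift[OF finS] by (auto simp: a_def)
    define \<pi> where "\<pi> = upd id V a"
    have NU: "N \<inter> U = {}" using opM_NU[OF H(4)] .
    have "\<forall>n\<in>N. \<pi> n = n" using NU VU by (auto simp: \<pi>_def upd_def)
    from opM_ren[OF H(4) this] have "opM U (\<pi> \<circ> id) G (ren \<pi> ` \<Delta>) N" .
    then have "opM U (upd id V a) G (ren \<pi> ` \<Delta>) N" by (simp add: \<pi>_def)
    then have "opD U id (Br V G) (ren \<pi> ` \<Delta>) (N \<union> a ` V)"
      using aS finV ainj by (intro opD_BrI) (auto simp: S_def)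
    then have "opM U id {#Br V G#} (ren \<pi> ` \<Delta>) (N \<union> a ` V)" by (rule opD_single[rotated]) simp
    from opM_nf[OF nfs this] obtain N3 where op3: "opM U id (nf {#Br V G#}) (ren \<pi> ` \<Delta>) N3" by blast
    define \<sigma>' where "\<sigma>' = (\<pi> \<circ> \<sigma>)(x := y)"
    have ctx3: "ctx_forms (nf {#Br V G#}) \<subseteq> ctx_forms G"
      using ctx_nf[OF nfs, of "{#Br V G#}"] by (simp add: formsi_Br del: formsi.simps)
    have wfB: "wf_vars B" "pos B" using H(1) by (auto simp: ljb_seq_def)
    have seq: "ljb_seq (nf {#Br V G#}) B0"
      using H(1) ctx3 normal_nf[OF nfs] wf_All[of y B0] wfB B(1) by (auto simp: ljb_seq_def)
    have allv3: "\<forall>C\<in>ctx_forms (nf {#Br V G#}). allv C \<subseteq> U" using ctx3 H(2) by blast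
    have allvB0: "allv B0 \<subseteq> U" using H(3) B(1) allv_All by blast
    have memG: "\<forall>D\<in>#\<Gamma>. ren \<sigma>' (dbf [] D) \<in> ren \<pi> ` \<Delta>"
    proof
      fix D assume "D \<in># \<Gamma>"
      with lj_all_R(3) have "x \<notin> fv D" by blast
      then have "ren \<sigma>' (dbf [] D) = ren (\<pi> \<circ> \<sigma>) (dbf [] D)"
        by (intro ren_cong) (auto simp: \<sigma>'_def dfv_dbf)
      also have "\<dots> = ren \<pi> (ren \<sigma> (dbf [] D))" by (simp add: ren_comp)
      finally show "ren \<sigma>' (dbf [] D) \<in> ren \<pi> ` \<Delta>" using H(5) \<open>D \<in># \<Gamma>\<close> by blast
    qed
    have fvimg: "\<sigma> ` (fv A - {x}) = fv B0 - {y}"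
      using arg_cong[OF H(6), of dfv] B(1) by (simp add: dfv_ren dfv_dbf)
    have disj: "fv B \<inter> V = {}" using wfB(1) B(1) by (auto simp: wf_vars_def V_def)
    have goal: "ren \<sigma>' (dbf [] A) = dbf [] B0"
    proof -
      have "ren \<sigma>' (dbf [] A) = ren (\<sigma>(x:=y)) (dbf [] A)"
      proof (intro ren_cong ballI)
        fix z assume "z \<in> dfv (dbf [] A)"
        then have z: "z \<in> fv A" by (simp add: dfv_dbf)
        show "\<sigma>' z = (\<sigma>(x:=y)) z"
        proof (cases "z = x")
          case True then show ?thesis by (simp add: \<sigma>'_def)
        next
          case False
          with z fvimg have "\<sigma> z \<in> fv B" using B(1) by auto
          with disj have "\<sigma> z \<notin> V" by blast
          with False show ?thesis by (simp add: \<sigma>'_def \<pi>_def upd_def)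
        qed
      qed
      with B(2) show ?thesis by simp
    qed
    from lj_all_R(2)[THEN spec[of _ \<sigma>'], THEN spec[of _ "nf {#Br V G#}"], THEN spec[of _ B0], THEN spec[of _ "ren \<pi> ` \<Delta>"], THEN spec[of _ N3]] seq allv3 allvB0 op3 memG goal
    have "ljb nf (nf {#Br V G#}) B0" by blast
    then have "ljb nf (nf {#Br (set (bvl (All y B0))) G#}) B0" by (simp add: V_def)
    from ljb_all_R[OF this] H(1) B(1) show "ljb nf G B" by simp
  qed
next
  case (lj_imp_R A \<Gamma> B)
  show ?case
  proof (intro allI impI, elim conjE)
    fix \<sigma> G C \<Delta> N
    assume H: "ljb_seq G C" "\<forall>C\<in>ctx_forms G. allv C \<subseteq> U" "allv C \<subseteq> U" "opM U id G \<Delta> N"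
      "\<forall>D\<in>#\<Gamma>. ren \<sigma> (dbf [] D) \<in> \<Delta>" "ren \<sigma> (dbf [] (Imp A B)) = dbf [] C"
    from imp_inv[of \<sigma> A B id C] H(6) obtain C1 C2 where C: "C = Imp C1 C2"
      "ren \<sigma> (dbf [] A) = dbf [] C1" "ren \<sigma> (dbf [] B) = dbf [] C2" by auto
    define X where "X = add_mset (Fm C1) G"
    have "opM U id X \<Delta> N" by (rule opM_mono[OF H(4)]) (auto simp: X_def)
    from opM.oF[OF this, of C1] have "opM U id X (insert (dbf [] C1) \<Delta>) N" by (simp add: X_def)
    from opM_nf[OF nfs this] obtain N3 where op3: "opM U id (nf X) (insert (dbf [] C1) \<Delta>) N3" by blast
    have ctx3: "ctx_forms (nf X) \<subseteq> insert C1 (ctx_forms G)"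
      using ctx_nf[OF nfs, of X] by (simp add: X_def)
    have wfC: "wf_vars C" "pos C" using H(1) by (auto simp: ljb_seq_def)
    have seq: "ljb_seq (nf X) C2"
      using H(1) ctx3 normal_nf[OF nfs] wf_Imp[of C1 C2] wfC C(1) by (auto simp: ljb_seq_def)
    have allv3: "\<forall>C\<in>ctx_forms (nf X). allv C \<subseteq> U" using ctx3 H(2,3) C(1) allv_Imp by blast
    have allvC2: "allv C2 \<subseteq> U" using H(3) C(1) allv_Imp by blast
    have memG: "\<forall>D\<in># add_mset A \<Gamma>. ren \<sigma> (dbf [] D) \<in> insert (dbf [] C1) \<Delta>" using H(5) C(2) by auto
    from lj_imp_R(2)[THEN spec[of _ \<sigma>], THEN spec[of _ "nf X"], THEN spec[of _ C2], THEN spec[of _ "insert (dbf [] C1) \<Delta>"], THEN spec[of _ N3]] seq allv3 allvC2 op3 memG C(3)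
    have "ljb nf (nf X) C2" by blast
    from ljb_imp_R[OF this[unfolded X_def]] H(1) C(1) show "ljb nf G C" by simp
  qed
next
  case (lj_alpha \<Gamma> A \<Gamma>' A')
  show ?case
  proof (intro allI impI, elim conjE)
    fix \<sigma> G B \<Delta> N
    assume H: "ljb_seq G B" "\<forall>C\<in>ctx_forms G. allv C \<subseteq> U" "allv B \<subseteq> U" "opM U id G \<Delta> N"
      "\<forall>D\<in>#\<Gamma>'. ren \<sigma> (dbf [] D) \<in> \<Delta>" "ren \<sigma> (dbf [] A') = dbf [] B"
    have m: "\<forall>D\<in>#\<Gamma>. ren \<sigma> (dbf [] D) \<in> \<Delta>"
    proof
      fix D assume "D \<in># \<Gamma>"
      from rel_mset_memD[OF lj_alpha(3) this] obtain D' where "D' \<in># \<Gamma>'" "alpha D D'" by blast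
      with H(5) show "ren \<sigma> (dbf [] D) \<in> \<Delta>" by (simp add: alpha_db)
    qed
    have "ren \<sigma> (dbf [] A) = dbf [] B" using H(6) alpha_db[OF lj_alpha(4)] by simp
    with lj_alpha(2) H m show "ljb nf G B" by blast
  qed
qed

theorem proposition8:
  fixes A :: "('f,'p) form"
    and nf :: "('f,'p) item multiset \<Rightarrow> ('f,'p) item multiset"
  assumes "nf_strategy nf"
    and "wf_vars A"
    and "ljp {#} A"
  shows "ljb nf {#} A"
proof -
  have M: "\<forall>\<sigma> G B \<Delta> N. ljb_seq G B \<and> (\<forall>C\<in>ctx_forms G. allv C \<subseteq> allv A) \<and> allv B \<subseteq> allv A \<and>
     opM (allv A) id G \<Delta> N \<and> (\<forall>D\<in>#{#}. ren \<sigma> (dbf [] D) \<in> \<Delta>) \<and> ren \<sigma> (dbf [] A) = dbf [] B \<longrightarrow> ljb nf G B"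
    by (rule main[OF assms(1) finite_allv assms(3)])
  have seq: "ljb_seq {#} A" using normal_empty assms(2) ljp_pos[OF assms(3)] by (simp add: ljb_seq_def)
  have op: "opM (allv A) id {#} {} {}" by (rule opM.oE)
  have c: "ljb_seq {#} A \<and> (\<forall>C\<in>ctx_forms {#}. allv C \<subseteq> allv A) \<and> allv A \<subseteq> allv A \<and>
     opM (allv A) id {#} {} {} \<and> (\<forall>D\<in>#{#}. ren id (dbf [] D) \<in> {}) \<and> ren id (dbf [] A) = dbf [] A"
    using seq op by simp
  from M[THEN spec[of _ id], THEN spec[of _ "{#}"], THEN spec[of _ A], THEN spec[of _ "{}"], THEN spec[of _ "{}"]] c
  show ?thesis by (rule mp)
qed


end
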